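(* Let $\mathcal{M}_{\hat A'\hat B'\to\hat A\hat B}$ be a bipartite quantum channel and let $\Theta^{\mathrm{PPT}}$ be a completely-PPT-preserving superchannel, i.e. $\Theta^{\mathrm{PPT}}(\mathcal{M})=\mathcal{P}^{\mathrm{post}}_{A_M\hat A\hat BB_M\to AB}\circ\mathcal{M}_{\hat A'\hat B'\to\hat A\hat B}\circ\mathcal{P}^{\mathrm{pre}}_{A'B'\to\hat A'\hat B'A_MB_M}$ for completely PPT-preserving channels $\mathcal{P}^{\mathrm{pre}},\mathcal{P}^{\mathrm{post}}$. Then $$E_N(\mathcal{M})\ge E_N(\Theta^{\mathrm{PPT}}(\mathcal{M})).$$
   Context: $T_X$ denotes partial transpose on system $X$. The diamond norm of a Hermitian-preserving map $\mathcal{P}_{C\to D}$ is $\sup_\psi\|(\mathrm{id}_R\otimes\mathcal{P})(\psi_{RC})\|_1$ over pure states. For a bipartite map $\mathcal{N}_{A'B'\to AB}$ (Alice: $A',A$; Bob: $B',B$), $E_N(\mathcal{N})=\log\|T_B\circ\mathcal{N}\circ T_{B'}\|_\diamond$. A bipartite channel is completely PPT-preserving if conjugating it by partial transposes on Bob's input and output systems yields a completely positive map. In the superchannel, Alice holds $A',\hat A',A_M,\hat A,A$ and Bob holds $B',\hat B',B_M,\hat B,B$. *)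

theory Defs
  imports Complex_Main
begin

text \<open>Operators on a finite-dimensional Hilbert space with orthonormal basis indexed by
  the finite type 'x are represented as matrices 'x => 'x => complex.  A composite
  system X Y is indexed by the product type 'x * 'y (tensor product).\<close>

type_synonym 'x qop = "'x \<Rightarrow> 'x \<Rightarrow> complex"

definition mmult :: "('x::finite) qop \<Rightarrow> 'x qop \<Rightarrow> 'x qop" where
  "mmult X Y = (\<lambda>i j. \<Sum>k\<in>UNIV. X i k * Y k j)"

definition adj :: "'x qop \<Rightarrow> 'x qop" where
  "adj X = (\<lambda>i j. cnj (X j i))"

definition qtrace :: "('x::finite) qop \<Rightarrow> complex" where
  "qtrace X = (\<Sum>i\<in>UNIV. X i i)"

definition psd_on :: "'x set \<Rightarrow> 'x qop \<Rightarrow> bool" where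
  "psd_on S X \<longleftrightarrow> (\<forall>v :: 'x \<Rightarrow> complex.
      (\<Sum>i\<in>S. \<Sum>j\<in>S. cnj (v i) * X i j * v j) \<in> \<real> \<and>
      0 \<le> Re (\<Sum>i\<in>S. \<Sum>j\<in>S. cnj (v i) * X i j * v j))"

definition psd :: "('x::finite) qop \<Rightarrow> bool" where
  "psd X \<longleftrightarrow> psd_on UNIV X"

definition abs_op :: "('x::finite) qop \<Rightarrow> 'x qop" where
  "abs_op X = (THE S. psd S \<and> mmult S S = mmult (adj X) X)"

definition trace_norm :: "('x::finite) qop \<Rightarrow> real" where
  "trace_norm X = Re (qtrace (abs_op X))"

text \<open>Partial transpose on Bob's (second) tensor factor.\<close>
definition ptrans :: "('x \<times> 'y) qop \<Rightarrow> ('x \<times> 'y) qop" where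
  "ptrans X = (\<lambda>(x, y) (x', y'). X (x, y') (x', y))"

definition id_tensor :: "('x qop \<Rightarrow> 'y qop) \<Rightarrow> ('r \<times> 'x) qop \<Rightarrow> ('r \<times> 'y) qop" where
  "id_tensor \<Phi> X = (\<lambda>(r, y) (r', y'). \<Phi> (\<lambda>x x'. X (r, x) (r', x')) y y')"

definition linear_qmap :: "('x qop \<Rightarrow> 'y qop) \<Rightarrow> bool" where
  "linear_qmap \<Phi> \<longleftrightarrow>
     (\<forall>X Y. \<Phi> (\<lambda>i j. X i j + Y i j) = (\<lambda>i j. \<Phi> X i j + \<Phi> Y i j)) \<and>
     (\<forall>(c::complex) X. \<Phi> (\<lambda>i j. c * X i j) = (\<lambda>i j. c * \<Phi> X i j))"

text \<open>Complete positivity: id_n tensor Phi is positive for every ancilla dimension n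
  (ancilla basis {..<n} of nat).\<close>
definition cp_map :: "(('x::finite) qop \<Rightarrow> ('y::finite) qop) \<Rightarrow> bool" where
  "cp_map \<Phi> \<longleftrightarrow> (\<forall>(n::nat) (X :: (nat \<times> 'x) qop).
      psd_on ({..<n} \<times> UNIV) X \<longrightarrow> psd_on ({..<n} \<times> UNIV) (id_tensor \<Phi> X))"

definition tp_map :: "(('x::finite) qop \<Rightarrow> ('y::finite) qop) \<Rightarrow> bool" where
  "tp_map \<Phi> \<longleftrightarrow> (\<forall>X. qtrace (\<Phi> X) = qtrace X)"

definition quantum_channel :: "(('x::finite) qop \<Rightarrow> ('y::finite) qop) \<Rightarrow> bool" where
  "quantum_channel \<Phi> \<longleftrightarrow> linear_qmap \<Phi> \<and> cp_map \<Phi> \<and> tp_map \<Phi>"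

definition diamond_norm :: "(('c::finite) qop \<Rightarrow> ('d::finite) qop) \<Rightarrow> real" where
  "diamond_norm \<Phi> = Sup {trace_norm (id_tensor \<Phi> (\<lambda>a b. \<psi> a * cnj (\<psi> b))) |
      \<psi> :: 'c \<times> 'c \<Rightarrow> complex. (\<Sum>k\<in>UNIV. (cmod (\<psi> k))\<^sup>2) = 1}"

text \<open>Bipartite map N_{A'B' -> AB}: input indexed by 'a1 * 'b1 (Alice A', Bob B'),
  output by 'a2 * 'b2 (Alice A, Bob B).\<close>
definition pt_conj :: "(('a1 \<times> 'b1) qop \<Rightarrow> ('a2 \<times> 'b2) qop) \<Rightarrow> ('a1 \<times> 'b1) qop \<Rightarrow> ('a2 \<times> 'b2) qop" where
  "pt_conj \<Phi> = (\<lambda>X. ptrans (\<Phi> (ptrans X)))"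

definition log_neg :: "((('a1::finite) \<times> ('b1::finite)) qop \<Rightarrow> (('a2::finite) \<times> ('b2::finite)) qop) \<Rightarrow> real" where
  "log_neg \<Phi> = log 2 (diamond_norm (pt_conj \<Phi>))"

definition cppt_channel :: "((('a1::finite) \<times> ('b1::finite)) qop \<Rightarrow> (('a2::finite) \<times> ('b2::finite)) qop) \<Rightarrow> bool" where
  "cppt_channel \<Phi> \<longleftrightarrow> quantum_channel \<Phi> \<and> cp_map (pt_conj \<Phi>)"

text \<open>M_{hat A' hat B' -> hat A hat B} tensor id_{A_M B_M}, with Alice's systems grouped
  as (hat A', A_M), Bob's as (hat B', B_M).\<close>
definition ext_mem :: "(('ai \<times> 'bi) qop \<Rightarrow> ('ao \<times> 'bo) qop) \<Rightarrow>
    (('ai \<times> 'am) \<times> ('bi \<times> 'bm)) qop \<Rightarrow> (('ao \<times> 'am) \<times> ('bo \<times> 'bm)) qop" where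
  "ext_mem M X = (\<lambda>((a, m), (b, n)) ((a2, m2), (b2, n2)).
      M (\<lambda>(a', b') (a'', b''). X ((a', m), (b', n)) ((a'', m2), (b'', n2))) (a, b) (a2, b2))"

definition superchannel_apply where
  "superchannel_apply Ppost Ppre M = Ppost \<circ> ext_mem M \<circ> Ppre"

end

theory Submission
  imports Defs "HOL-Analysis.Analysis"
begin

definition rmul :: "('i \<Rightarrow> 'k::finite \<Rightarrow> complex) \<Rightarrow> ('k \<Rightarrow> 'j \<Rightarrow> complex) \<Rightarrow> 'i \<Rightarrow> 'j \<Rightarrow> complex"
  where "rmul A B = (\<lambda>i j. \<Sum>k\<in>UNIV. A i k * B k j)"
definition radj :: "('i \<Rightarrow> 'j \<Rightarrow> complex) \<Rightarrow> 'j \<Rightarrow> 'i \<Rightarrow> complex"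
  where "radj A = (\<lambda>i j. cnj (A j i))"
definition idm :: "'x \<Rightarrow> 'x \<Rightarrow> complex" where "idm = (\<lambda>i j. if i = j then 1 else 0)"
definition herm :: "('x \<Rightarrow> 'x \<Rightarrow> complex) \<Rightarrow> bool" where "herm X \<longleftrightarrow> radj X = X"
definition unitary :: "('x::finite) qop \<Rightarrow> bool" where
  "unitary U \<longleftrightarrow> rmul (radj U) U = idm \<and> rmul U (radj U) = idm"
definition udiag :: "('x::finite \<Rightarrow> 'x \<Rightarrow> complex) \<Rightarrow> ('x \<Rightarrow> real) \<Rightarrow> 'x qop" where
  "udiag U d = (\<lambda>i j. \<Sum>k\<in>UNIV. U i k * complex_of_real (d k) * cnj (U j k))"
definition cinner :: "('x::finite \<Rightarrow> complex) \<Rightarrow> ('x \<Rightarrow> complex) \<Rightarrow> complex" where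
  "cinner u v = (\<Sum>i\<in>UNIV. cnj (u i) * v i)"
definition mv :: "('i \<Rightarrow> 'k::finite \<Rightarrow> complex) \<Rightarrow> ('k \<Rightarrow> complex) \<Rightarrow> 'i \<Rightarrow> complex" where
  "mv A v = (\<lambda>i. \<Sum>k\<in>UNIV. A i k * v k)"

lemma adj_radj: "adj = radj" by (auto simp: adj_def radj_def fun_eq_iff)
lemma mmult_rmul: "mmult = rmul" by (auto simp: mmult_def rmul_def fun_eq_iff)

lemma rmul_assoc: "rmul (rmul A B) C = rmul A (rmul B C)"
  by (auto simp: rmul_def fun_eq_iff sum_distrib_left sum_distrib_right mult.assoc intro: sum.swap)

lemma radj_rmul: "radj (rmul A B) = rmul (radj B) (radj A)"
  by (auto simp: rmul_def radj_def fun_eq_iff mult.commute)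

lemma radj_radj[simp]: "radj (radj A) = A" by (auto simp: radj_def)

lemma if01_mult[simp]: "(if P then 1 else 0) * (b::complex) = (if P then b else 0)" by simp
lemma mult_if01[simp]: "(b::complex) * (if P then 1 else 0) = (if P then b else 0)" by simp
lemma rmul_idm_left[simp]: "rmul idm A = A"
  by (auto simp: rmul_def idm_def fun_eq_iff)
lemma rmul_idm_right[simp]: "rmul A idm = A"
  by (auto simp: rmul_def idm_def fun_eq_iff)

lemma radj_idm[simp]: "radj idm = idm" by (auto simp: radj_def idm_def fun_eq_iff)

lemma trace_cyclic: "qtrace (rmul A B) = qtrace (rmul B A)"
  unfolding qtrace_def rmul_def by (subst sum.swap) (simp add: mult.commute)

lemma mv_rmul: "mv (rmul A B) v = mv A (mv B v)"
  by (auto simp: mv_def rmul_def fun_eq_iff sum_distrib_left sum_distrib_right mult.assoc intro: sum.swap)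

lemma cinner_mv: "cinner u (mv A v) = cinner (mv (radj A) u) v"
  by (auto simp: cinner_def mv_def radj_def sum_distrib_left sum_distrib_right mult_ac intro: sum.swap)

lemma quad_cinner: "(\<Sum>i\<in>UNIV. \<Sum>j\<in>UNIV. cnj (v i) * X i j * v j) = cinner v (mv X v)"
  by (simp add: cinner_def mv_def sum_distrib_left mult.assoc)

lemma psd_iff: "psd X \<longleftrightarrow> (\<forall>v. cinner v (mv X v) \<in> \<real> \<and> 0 \<le> Re (cinner v (mv X v)))"
  by (simp add: psd_def psd_on_def quad_cinner)

lemma cinner_self: "cinner v v = complex_of_real (\<Sum>i\<in>UNIV. (cmod (v i))\<^sup>2)"
proof -
  have e: "cnj (v i) * v i = complex_of_real ((cmod (v i))\<^sup>2)" for i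
    by (subst complex_norm_square) (rule mult.commute)
  show ?thesis unfolding cinner_def of_real_sum by (intro sum.cong refl e)
qed

lemma cinner_self_Re: "Re (cinner v v) = (\<Sum>i\<in>UNIV. (cmod (v i))\<^sup>2)"
  by (simp add: cinner_self)

lemma cinner_self_ge0: "0 \<le> Re (cinner v v)"
  by (simp add: cinner_self_Re sum_nonneg)

lemma cinner_self_eq0: "Re (cinner v v) = 0 \<Longrightarrow> v = (\<lambda>_. 0)"
proof -
  assume "Re (cinner v v) = 0"
  hence "(\<Sum>i\<in>UNIV. (cmod (v i))\<^sup>2) = 0" by (simp add: cinner_self_Re)
  hence "\<forall>i\<in>UNIV. (cmod (v i))\<^sup>2 = 0" by (subst (asm) sum_nonneg_eq_0_iff) auto
  thus ?thesis by auto
qed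

lemma cnj_cinner: "cnj (cinner u v) = cinner v u"
  by (simp add: cinner_def mult.commute)

lemma herm_cinner: "herm A \<Longrightarrow> cinner u (mv A v) = cnj (cinner v (mv A u))"
  by (metis cinner_mv cnj_cinner herm_def)

lemma herm_quad_real: "herm A \<Longrightarrow> cinner v (mv A v) \<in> \<real>"
  using herm_cinner[of A v v] by (metis Reals_cnj_iff)

lemma quad_expand:
  fixes t :: real and u v :: "'x::finite \<Rightarrow> complex"
  shows "cinner (\<lambda>i. v i + t * u i) (mv A (\<lambda>i. v i + t * u i)) =
     cinner v (mv A v) + t * (cinner v (mv A u) + cinner u (mv A v)) + t\<^sup>2 * cinner u (mv A u)"
  by (simp add: cinner_def mv_def algebra_simps sum.distrib sum_distrib_left power2_eq_square)

lemma real_quad_zero: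
  fixes b c :: real
  assumes "\<And>t. 0 \<le> 2*t*b + t\<^sup>2*c"
  shows "b = 0"
proof (rule ccontr)
  assume b: "b \<noteq> 0"
  define t where "t = - b / (\<bar>c\<bar> + 1)"
  have p: "\<bar>c\<bar> + 1 > 0" by simp
  have "t\<^sup>2 * c \<le> t\<^sup>2 * \<bar>c\<bar>" by (simp add: mult_left_mono)
  also have "\<dots> = b\<^sup>2 * \<bar>c\<bar> / (\<bar>c\<bar> + 1)\<^sup>2" by (simp add: t_def power_divide)
  also have "\<dots> \<le> b\<^sup>2 / (\<bar>c\<bar> + 1)"
  proof -
    have "b\<^sup>2 * \<bar>c\<bar> \<le> b\<^sup>2 * (\<bar>c\<bar> + 1)" by (simp add: mult_left_mono)
    hence "b\<^sup>2 * \<bar>c\<bar> / (\<bar>c\<bar> + 1)\<^sup>2 \<le> b\<^sup>2 * (\<bar>c\<bar> + 1) / (\<bar>c\<bar> + 1)\<^sup>2"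
      by (simp add: divide_right_mono)
    also have "\<dots> = b\<^sup>2 / (\<bar>c\<bar> + 1)" using p by (simp add: power2_eq_square)
    finally show ?thesis .
  qed
  finally have 1: "t\<^sup>2 * c \<le> b\<^sup>2 / (\<bar>c\<bar> + 1)" .
  have 2: "2*t*b = - 2 * b\<^sup>2 / (\<bar>c\<bar> + 1)" by (simp add: t_def power2_eq_square)
  have "b\<^sup>2 / (\<bar>c\<bar> + 1) > 0" using b p by simp
  with 1 2 assms[of t] show False by linarith
qed

definition supp_in :: "'x set \<Rightarrow> ('x \<Rightarrow> complex) \<Rightarrow> bool" where
  "supp_in I v \<longleftrightarrow> (\<forall>i. i \<notin> I \<longrightarrow> v i = 0)"

lemma psd_kernel:
  assumes h: "herm A"
    and pos: "\<And>w. supp_in I w \<Longrightarrow> 0 \<le> Re (cinner w (mv A w))"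
    and v: "supp_in I v" and u: "supp_in I u" and z: "cinner v (mv A v) = 0"
  shows "Re (cinner u (mv A v)) = 0"
proof -
  have "0 \<le> 2*t*Re (cinner u (mv A v)) + t\<^sup>2 * Re (cinner u (mv A u))" for t :: real
  proof -
    have s: "supp_in I (\<lambda>i. v i + complex_of_real t * u i)" using u v by (simp add: supp_in_def)
    have e: "cinner v (mv A u) + cinner u (mv A v) = 2 * Re (cinner u (mv A v))"
      using herm_cinner[OF h, of v u] by (simp add: complex_eq_iff)
    have "0 \<le> Re (cinner (\<lambda>i. v i + t * u i) (mv A (\<lambda>i. v i + t * u i)))" using pos[OF s] .
    also have "\<dots> = 2*t*Re (cinner u (mv A v)) + t\<^sup>2 * Re (cinner u (mv A u))"
      using quad_expand[of v t u A] z e by simp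
    finally show ?thesis .
  qed
  thus ?thesis by (rule real_quad_zero)
qed

lemma norm_vec_sq: "(norm (x::complex^'n))\<^sup>2 = (\<Sum>i\<in>UNIV. (cmod (x$i))\<^sup>2)"
  by (simp add: norm_vec_def L2_set_def sum_nonneg)

lemma cinner_vec: "cinner (vec_nth x) (vec_nth x) = complex_of_real ((norm (x::complex^'n))\<^sup>2)"
  by (simp add: cinner_self norm_vec_sq)

lemma exists_max:
  fixes H :: "'x::finite qop"
  assumes i0: "i0 \<in> I"
  shows "\<exists>v. supp_in I v \<and> cinner v v = 1 \<and>
     (\<forall>w. supp_in I w \<and> cinner w w = 1 \<longrightarrow> Re (cinner w (mv H w)) \<le> Re (cinner v (mv H v)))"
proof -
  let ?K = "{x::complex^'x. (\<forall>i. i \<notin> I \<longrightarrow> x$i = 0) \<and> norm x = 1}"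
  let ?f = "\<lambda>x::complex^'x. Re (cinner (vec_nth x) (mv H (vec_nth x)))"
  have Keq: "?K = (\<Inter>i\<in>-I. {x. x$i = 0}) \<inter> sphere 0 1" by auto
  have "closed ?K" unfolding Keq
    by (intro closed_Int closed_INT closed_sphere ballI closed_Collect_eq continuous_intros)
  moreover have "bounded ?K" by (rule bounded_subset[OF bounded_cball[of 0 1]]) auto
  ultimately have cK: "compact ?K" by (simp add: compact_eq_bounded_closed)
  define e where "e = (\<chi> j. if j = i0 then (1::complex) else 0)"
  have "(norm e)\<^sup>2 = 1" unfolding norm_vec_sq e_def
    by (simp add: if_distrib[of "\<lambda>z. (cmod z)\<^sup>2"] cong: if_cong)
  hence "norm e = 1" using norm_ge_zero[of e] by (auto simp: power2_eq_1_iff)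
  hence "e \<in> ?K" using i0 by (auto simp: e_def)
  hence ne: "?K \<noteq> {}" by auto
  have cf: "continuous_on ?K ?f"
    unfolding cinner_def mv_def by (intro continuous_intros)
  obtain x where xK: "x \<in> ?K" and xm: "\<And>y. y \<in> ?K \<Longrightarrow> ?f y \<le> ?f x"
    using continuous_attains_sup[OF cK ne cf] by blast
  show ?thesis
  proof (intro exI conjI allI impI)
    show "supp_in I (vec_nth x)" using xK by (simp add: supp_in_def)
    show "cinner (vec_nth x) (vec_nth x) = 1" using xK by (simp add: cinner_vec)
    fix w assume w: "supp_in I w \<and> cinner w w = 1"
    have "vec_lambda w \<in> ?K"
    proof -
      have vw: "vec_nth (vec_lambda w) = w" by (simp add: fun_eq_iff)
      have "cinner (vec_nth (vec_lambda w)) (vec_nth (vec_lambda w)) = 1" using w by (simp add: vw)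
      hence "(norm (vec_lambda w))\<^sup>2 = 1" by (simp only: cinner_vec of_real_eq_1_iff)
      hence "norm (vec_lambda w) = 1" using norm_ge_zero[of "vec_lambda w"] by (auto simp: power2_eq_1_iff)
      thus ?thesis using w by (simp add: supp_in_def)
    qed
    from xm[OF this] have vw: "vec_nth (vec_lambda w) = w" by (simp add: fun_eq_iff)
    from xm[OF \<open>vec_lambda w \<in> ?K\<close>] show "Re (cinner w (mv H w)) \<le> Re (cinner (vec_nth x) (mv H (vec_nth x)))" by (simp add: vw)
  qed
qed

lemma mv_scal: "mv A (\<lambda>i. c * v i) = (\<lambda>i. c * mv A v i)"
  by (simp add: mv_def sum_distrib_left mult_ac)
lemma cinner_scal_left: "cinner (\<lambda>i. c * u i) v = cnj c * cinner u v"
  by (simp add: cinner_def sum_distrib_left mult_ac)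
lemma cinner_scal_right: "cinner u (\<lambda>i. c * v i) = c * cinner u v"
  by (simp add: cinner_def sum_distrib_left mult_ac)
lemma cinner_diff_right: "cinner u (\<lambda>i. a i - b i) = cinner u a - cinner u b"
  by (simp add: cinner_def sum_subtractf right_diff_distrib)
lemma cinner_add_right: "cinner u (\<lambda>i. a i + b i) = cinner u a + cinner u b"
  by (simp add: cinner_def sum.distrib distrib_left)
lemma cinner_add_left: "cinner (\<lambda>i. a i + b i) u = cinner a u + cinner b u"
  by (simp add: cinner_def sum.distrib distrib_right)
lemma mv_shift: "mv (\<lambda>i j. c * idm i j - H i j) v = (\<lambda>i. c * v i - mv H v i)"
proof -
  have e: "(if P then a else 0) * b = (if P then a * b else (0::complex))" for P a b by simp
  show ?thesis by (simp add: mv_def idm_def sum_subtractf left_diff_distrib e fun_eq_iff)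
qed

lemma herm_entry: "herm H \<Longrightarrow> cnj (H j i) = H i j"
  unfolding herm_def radj_def by (drule fun_cong[where x=i], drule fun_cong[where x=j]) simp

lemma herm_shift: assumes "herm H" shows "herm (\<lambda>i j. complex_of_real l * idm i j - H i j)"
proof -
  have e: "cnj (H j i) = H i j" for i j by (rule herm_entry[OF assms])
  show ?thesis unfolding herm_def radj_def idm_def by (auto simp: fun_eq_iff e)
qed

lemma exists_eigen:
  fixes H :: "'x::finite qop"
  assumes h: "herm H" and sH: "\<And>i j. i \<notin> I \<or> j \<notin> I \<Longrightarrow> H i j = 0" and i0: "i0 \<in> I"
  shows "\<exists>v (l::real). supp_in I v \<and> cinner v v = 1 \<and> mv H v = (\<lambda>i. l * v i)"
proof -
  obtain v where sv: "supp_in I v" and nv: "cinner v v = 1"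
    and mx: "\<And>w. supp_in I w \<Longrightarrow> cinner w w = 1 \<Longrightarrow> Re (cinner w (mv H w)) \<le> Re (cinner v (mv H v))"
    using exists_max[OF i0, of H] by blast
  define l where "l = Re (cinner v (mv H v))"
  define A where "A = (\<lambda>i j. complex_of_real l * idm i j - H i j)"
  have hA: "herm A" unfolding A_def by (rule herm_shift[OF h])
  have qA: "cinner w (mv A w) = l * cinner w w - cinner w (mv H w)" for w
    unfolding A_def mv_shift cinner_diff_right cinner_scal_right ..
  have suppH: "supp_in I (mv H w)" for w
    using sH by (simp add: supp_in_def mv_def)
  have pos: "0 \<le> Re (cinner w (mv A w))" if sw: "supp_in I w" for w
  proof (cases "Re (cinner w w) = 0")
    case True
    hence "w = (\<lambda>_. 0)" by (rule cinner_self_eq0)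
    thus ?thesis by (simp add: cinner_def)
  next
    case False
    define n where "n = Re (cinner w w)"
    have npos: "n > 0" using False cinner_self_ge0[of w] unfolding n_def by linarith
    have cw: "cinner w w = n" unfolding n_def using cinner_self[of w] by simp
    define w1 where "w1 = (\<lambda>i. complex_of_real (1 / sqrt n) * w i)"
    have rr: "(1 / sqrt n) * (1 / sqrt n) = 1 / n" using npos
      by (simp add: divide_simps)
    have cc: "cnj (complex_of_real (1 / sqrt n)) * complex_of_real (1 / sqrt n) = complex_of_real (1 / n)"
      by (simp only: complex_cnj_complex_of_real of_real_mult[symmetric] rr)
    have "supp_in I w1" using sw by (simp add: supp_in_def w1_def)
    moreover have "cinner w1 w1 = 1"
      unfolding w1_def cinner_scal_left cinner_scal_right cw mult.assoc[symmetric] cc using npos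
      by (simp flip: of_real_mult)
    ultimately have "Re (cinner w1 (mv H w1)) \<le> l" unfolding l_def by (rule mx)
    moreover have "cinner w1 (mv H w1) = cinner w (mv H w) / n"
      unfolding w1_def mv_scal cinner_scal_left cinner_scal_right mult.assoc[symmetric] cc
      by (simp add: divide_inverse mult.commute)
    ultimately have "Re (cinner w (mv H w)) / n \<le> l" by simp
    hence "Re (cinner w (mv H w)) \<le> l * n" using npos by (simp add: divide_le_eq)
    thus ?thesis unfolding qA cw by simp
  qed
  have real: "cinner v (mv H v) = l" unfolding l_def using herm_quad_real[OF h, of v]
    by (simp add: complex_eq_iff Reals_def)
  have z: "cinner v (mv A v) = 0" unfolding qA nv real by simp
  have su: "supp_in I (mv A v)" unfolding A_def mv_shift using sv suppH[of v]
    by (simp add: supp_in_def)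
  have "Re (cinner (mv A v) (mv A v)) = 0" by (rule psd_kernel[OF hA pos sv su z])
  hence "mv A v = (\<lambda>_. 0)" by (rule cinner_self_eq0)
  hence "mv H v = (\<lambda>i. l * v i)" unfolding A_def mv_shift by (auto simp: fun_eq_iff dest: fun_cong)
  thus ?thesis using sv nv by blast
qed

definition dg :: "('x \<Rightarrow> real) \<Rightarrow> 'x \<Rightarrow> 'x \<Rightarrow> complex" where
  "dg d = (\<lambda>i j. if i = j then complex_of_real (d i) else 0)"

lemma cnj_if01[simp]: "cnj (if P then 1 else 0) = (if P then 1 else 0)" by simp
lemma if_0_mult: "(if P then a else 0) * b = (if P then a * b else (0::complex))" by simp
lemma mult_if_0: "b * (if P then a else 0) = (if P then b * a else (0::complex))" by simp

lemma udiag_rmul: "udiag U d = rmul (rmul U (dg d)) (radj U)"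
  by (simp add: udiag_def rmul_def dg_def radj_def fun_eq_iff mult_if_0 if_0_mult)

lemma radj_dg[simp]: "radj (dg d) = dg d" by (auto simp: radj_def dg_def fun_eq_iff)

lemma udiag_conj: "rmul A (rmul (udiag U d) (radj A)) = udiag (rmul A U) d"
  by (simp add: udiag_rmul rmul_assoc radj_rmul)

lemma herm_udiag: "herm (udiag U d)"
  by (simp add: herm_def udiag_rmul radj_rmul rmul_assoc)

lemma unitary_idm: "unitary idm" by (simp add: unitary_def)

lemma unitary_mult: "unitary A \<Longrightarrow> unitary B \<Longrightarrow> unitary (rmul A B)"
  unfolding unitary_def radj_rmul
  by (metis rmul_assoc rmul_idm_left)

lemma mv_idm[simp]: "mv idm v = v" by (simp add: mv_def idm_def)

lemma udiag_idm_zero: "udiag idm (\<lambda>_. 0) = (\<lambda>_ _. 0)"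
  by (simp add: udiag_def)

lemma rmul_idm_minus:
  "rmul (\<lambda>i j. idm i j - c * P i j) (\<lambda>i j. idm i j - c * P i j)
   = (\<lambda>i j. idm i j - 2 * c * P i j + c * c * rmul P P i j)"
proof -
  have e: "(idm i k - c * P i k) * (idm k j - c * P k j) =
     idm i k * idm k j - c * (idm i k * P k j) - c * (P i k * idm k j) + (c * c) * (P i k * P k j)"
    for i j k by (simp add: algebra_simps)
  show ?thesis
    unfolding rmul_def e
    by (simp add: fun_eq_iff sum.distrib sum_subtractf sum_distrib_left[symmetric] idm_def if_0_mult mult_if_0)
qed

lemma householder:
  fixes v :: "'x::finite \<Rightarrow> complex"
  assumes sv: "supp_in I v" and nv: "cinner v v = 1" and i0: "i0 \<in> I"
    and vr: "v i0 = complex_of_real a" and a0: "0 \<le> a"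
  shows "\<exists>Q. herm Q \<and> rmul Q Q = idm \<and> (\<forall>i j. i \<notin> I \<or> j \<notin> I \<longrightarrow> Q i j = idm i j)
           \<and> mv Q (\<lambda>j. idm j i0) = v"
proof -
  define e where "e = (\<lambda>j. idm j i0)"
  define w where "w = (\<lambda>j. v j - e j)"
  define n where "n = Re (cinner w w)"
  show ?thesis
  proof (cases "n = 0")
    case True
    hence "w = (\<lambda>_. 0)" unfolding n_def by (rule cinner_self_eq0)
    hence "v = e" unfolding w_def by (auto simp: fun_eq_iff dest: fun_cong)
    thus ?thesis
      by (intro exI[of _ idm]) (simp add: herm_def e_def)
  next
    case False
    have en: "cinner e e = 1" by (simp add: cinner_def e_def idm_def)
    have ev: "cinner e v = v i0" by (simp add: cinner_def e_def idm_def)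
    have cw: "cinner w w = n" unfolding n_def using cinner_self[of w] by simp
    have cw2: "cinner w w = 2 - 2 * v i0"
      unfolding w_def cinner_diff_right cinner_def[of "\<lambda>j. v j - e j"]
      using nv en ev
      by (simp add: cinner_def sum_subtractf left_diff_distrib vr e_def idm_def)
    have n2: "n = 2 - 2 * a" using cw cw2 vr by (simp add: complex_eq_iff)
    define Q where "Q = (\<lambda>i j. idm i j - 2 * w i * cnj (w j) / n)"
    have hQ: "herm Q" by (simp add: herm_def Q_def radj_def fun_eq_iff idm_def mult.commute)
    define P where "P = (\<lambda>i j. w i * cnj (w j))"
    have QP: "Q = (\<lambda>i j. idm i j - (2 / n) * P i j)" by (simp add: Q_def P_def fun_eq_iff)
    have PP: "rmul P P = (\<lambda>i j. n * P i j)"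
    proof -
      have "(\<Sum>k\<in>UNIV. w i * cnj (w k) * (w k * cnj (w j))) = w i * cnj (w j) * cinner w w" for i j
        by (simp add: cinner_def sum_distrib_left mult_ac)
      thus ?thesis unfolding rmul_def P_def cw by (simp add: fun_eq_iff mult_ac)
    qed
    have QQ: "rmul Q Q = idm"
      unfolding QP rmul_idm_minus PP using False by (simp add: fun_eq_iff field_simps)
    have sw: "supp_in I w" using sv i0 by (auto simp: supp_in_def w_def e_def idm_def)
    have supQ: "\<forall>i j. i \<notin> I \<or> j \<notin> I \<longrightarrow> Q i j = idm i j"
      using sw by (auto simp: Q_def supp_in_def)
    have "mv Q e = v"
    proof -
      have wi0: "w i0 = complex_of_real (a - 1)" by (simp add: w_def e_def idm_def vr)
      have "mv Q e = (\<lambda>i. e i - 2 * w i * cnj (w i0) / n)"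
        by (simp add: mv_def Q_def e_def idm_def fun_eq_iff if_0_mult mult_if_0 cong: if_cong)
      also have "\<dots> = (\<lambda>i. e i + w i)"
      proof -
        have r: "2 * (a - 1) / n = (-1::real)" using False n2 by (simp add: field_simps)
        have "2 * cnj (w i0) / n = complex_of_real (2 * (a - 1) / n)" using wi0 by simp
        hence "2 * cnj (w i0) / n = -1" unfolding r by simp
        moreover have "2 * w i * cnj (w i0) / n = w i * (2 * cnj (w i0) / n)" for i
          by (simp add: mult_ac)
        ultimately have "2 * w i * cnj (w i0) / n = - w i" for i by simp
        thus ?thesis by simp
      qed
      also have "\<dots> = v" by (simp add: w_def)
      finally show ?thesis .
    qed
    thus ?thesis using hQ QQ supQ unfolding e_def by blast
  qed
qed

definition idout :: "'x set \<Rightarrow> ('x \<Rightarrow> 'x \<Rightarrow> complex) \<Rightarrow> bool" where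
  "idout I A \<longleftrightarrow> (\<forall>i j. i \<notin> I \<or> j \<notin> I \<longrightarrow> A i j = idm i j)"
definition zout :: "'x set \<Rightarrow> ('x \<Rightarrow> 'x \<Rightarrow> complex) \<Rightarrow> bool" where
  "zout I A \<longleftrightarrow> (\<forall>i j. i \<notin> I \<or> j \<notin> I \<longrightarrow> A i j = 0)"

lemma idout_rmul: "idout I A \<Longrightarrow> idout I B \<Longrightarrow> idout I (rmul (A::'x::finite qop) B)"
proof -
  assume a: "idout I A" and b: "idout I B"
  have "rmul A B i j = idm i j" if "i \<notin> I \<or> j \<notin> I" for i j
  proof (cases "i \<notin> I")
    case True
    hence "rmul A B i j = rmul idm B i j" using a by (simp add: idout_def rmul_def)
    thus ?thesis using b True by (simp add: idout_def)
  next
    case False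
    hence j: "j \<notin> I" using that by simp
    hence "rmul A B i j = rmul A idm i j" using b by (simp add: idout_def rmul_def)
    thus ?thesis using a j by (simp add: idout_def)
  qed
  thus ?thesis by (simp add: idout_def)
qed

lemma zout_rmul1: "zout I H \<Longrightarrow> idout I A \<Longrightarrow> zout I (rmul (H::'x::finite qop) A)"
proof -
  assume a: "zout I H" and b: "idout I A"
  have "rmul H A i j = 0" if "i \<notin> I \<or> j \<notin> I" for i j
  proof (cases "i \<notin> I")
    case True thus ?thesis using a by (simp add: zout_def rmul_def)
  next
    case False
    hence j: "j \<notin> I" using that by simp
    hence "rmul H A i j = rmul H idm i j" using b by (simp add: idout_def rmul_def)
    thus ?thesis using a j by (simp add: zout_def)
  qed
  thus ?thesis by (simp add: zout_def)
qed

lemma zout_rmul2: "zout I H \<Longrightarrow> idout I A \<Longrightarrow> zout I (rmul A (H::'x::finite qop))"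
proof -
  assume a: "zout I H" and b: "idout I A"
  have "rmul A H i j = 0" if "i \<notin> I \<or> j \<notin> I" for i j
  proof (cases "j \<notin> I")
    case True thus ?thesis using a by (simp add: zout_def rmul_def)
  next
    case False
    hence i: "i \<notin> I" using that by simp
    hence "rmul A H i j = rmul idm H i j" using b by (simp add: idout_def rmul_def)
    thus ?thesis using a i by (simp add: zout_def)
  qed
  thus ?thesis by (simp add: zout_def)
qed

lemma udiag_upd: "udiag U (d(k := x)) i j = udiag U d i j + U i k * complex_of_real (x - d k) * cnj (U j k)"
proof -
  have e: "U i k' * complex_of_real ((d(k := x)) k') * cnj (U j k') =
        U i k' * complex_of_real (d k') * cnj (U j k') +
        (if k' = k then U i k * complex_of_real (x - d k) * cnj (U j k) else 0)" for k'
    by (simp add: algebra_simps of_real_diff)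
  show ?thesis unfolding udiag_def e by (simp add: sum.distrib)
qed

lemma herm_rmul3: "herm H \<Longrightarrow> herm Q \<Longrightarrow> herm (rmul Q (rmul H Q))"
  unfolding herm_def by (simp add: radj_rmul rmul_assoc)

lemma spectral_supp:
  fixes I :: "'x::finite set"
  shows "\<forall>H. herm H \<and> zout I H \<longrightarrow> (\<exists>U d. unitary U \<and> idout I U \<and> (\<forall>k. k \<notin> I \<longrightarrow> d k = 0) \<and> H = udiag U d)"
  using finite[of I]
proof (induction I rule: finite_induct)
  case empty
  show ?case
  proof (intro allI impI)
    fix H :: "'x qop" assume "herm H \<and> zout {} H"
    hence "H = (\<lambda>_ _. 0)" by (auto simp: zout_def fun_eq_iff)
    thus "\<exists>U d. unitary U \<and> idout {} U \<and> (\<forall>k. k \<notin> {} \<longrightarrow> d k = 0) \<and> H = udiag U d"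
      by (intro exI[of _ idm] exI[of _ "\<lambda>_. 0"]) (simp add: unitary_idm idout_def udiag_idm_zero)
  qed
next
  case (insert i0 I')
  let ?I = "insert i0 I'"
  show ?case
  proof (intro allI impI)
    fix H :: "'x qop" assume a: "herm H \<and> zout ?I H"
    hence h: "herm H" and sH: "zout ?I H" by auto
    obtain v l where sv: "supp_in ?I v" and nv: "cinner v v = 1" and Hv: "mv H v = (\<lambda>i. complex_of_real l * v i)"
      using exists_eigen[OF h, of ?I i0] sH by (auto simp: zout_def)
    define \<alpha> where "\<alpha> = v i0"
    define c where "c = (if \<alpha> = 0 then 1 else cnj \<alpha> / cmod \<alpha>)"
    define v' where "v' = (\<lambda>i. c * v i)"
    have cc: "cnj c * c = 1"
    proof (cases "\<alpha> = 0")
      case False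
      have "cnj c * c = \<alpha> * cnj \<alpha> / (cmod \<alpha> * cmod \<alpha>)" using False by (simp add: c_def)
      also have "\<alpha> * cnj \<alpha> = complex_of_real (cmod \<alpha> * cmod \<alpha>)"
        by (simp flip: complex_norm_square add: power2_eq_square)
      finally show ?thesis using False by simp
    qed (simp add: c_def)
    have ca: "c * \<alpha> = complex_of_real (cmod \<alpha>)"
    proof (cases "\<alpha> = 0")
      case False
      have "c * \<alpha> = \<alpha> * cnj \<alpha> / cmod \<alpha>" using False by (simp add: c_def mult.commute)
      also have "\<alpha> * cnj \<alpha> = complex_of_real (cmod \<alpha> * cmod \<alpha>)"
        by (simp flip: complex_norm_square add: power2_eq_square)
      finally show ?thesis using False by simp
    qed (simp add: c_def)
    have sv': "supp_in ?I v'" using sv by (simp add: supp_in_def v'_def)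
    have nv': "cinner v' v' = 1" unfolding v'_def cinner_scal_left cinner_scal_right nv
      using cc by (simp add: mult.assoc[symmetric])
    have v'0: "v' i0 = complex_of_real (cmod \<alpha>)" using ca by (simp add: v'_def \<alpha>_def)
    have Hv': "mv H v' = (\<lambda>i. complex_of_real l * v' i)"
      unfolding v'_def mv_scal Hv by (simp add: fun_eq_iff mult_ac)
    obtain Q where hQ: "herm Q" and QQ: "rmul Q Q = idm" and iQ: "\<forall>i j. i \<notin> ?I \<or> j \<notin> ?I \<longrightarrow> Q i j = idm i j"
      and Qe: "mv Q (\<lambda>j. idm j i0) = v'"
      using householder[OF sv' nv' _ v'0] by auto
    have iQ': "idout ?I Q" using iQ by (simp add: idout_def)
    define H' where "H' = rmul Q (rmul H Q)"
    have hH': "herm H'" unfolding H'_def by (rule herm_rmul3[OF h hQ])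
    have sH': "zout ?I H'" unfolding H'_def by (intro zout_rmul2[OF _ iQ'] zout_rmul1[OF sH iQ'])
    have Qv': "mv Q v' = (\<lambda>j. idm j i0)" unfolding Qe[symmetric] mv_rmul[symmetric] QQ by simp
    have "mv H' (\<lambda>j. idm j i0) = (\<lambda>i. complex_of_real l * idm i i0)"
      unfolding H'_def mv_rmul Qe Hv' mv_scal Qv' ..
    hence col: "H' i i0 = complex_of_real l * idm i i0" for i
      by (drule_tac fun_cong[where x=i]) (simp add: mv_def idm_def if_0_mult mult_if_0)
    have row: "H' i0 j = complex_of_real l * idm i0 j" for j
    proof -
      have "H' i0 j = cnj (H' j i0)" using herm_entry[OF hH', of j i0] by simp
      also have "\<dots> = complex_of_real l * idm i0 j" unfolding col by (simp add: idm_def)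
      finally show ?thesis .
    qed
    define H'' where "H'' = (\<lambda>i j. if i = i0 \<or> j = i0 then 0 else H' i j)"
    have hH'': "herm H''" using herm_entry[OF hH'] unfolding herm_def H''_def radj_def
      by (auto simp: fun_eq_iff)
    have sH'': "zout I' H''" using sH' unfolding zout_def H''_def by auto
    obtain U'' d'' where uU: "unitary U''" and iU: "idout I' U''" and d0: "\<forall>k. k \<notin> I' \<longrightarrow> d'' k = 0"
      and eH'': "H'' = udiag U'' d''"
      using insert.IH hH'' sH'' by blast
    define d where "d = d''(i0 := l)"
    have Ui0: "U'' i i0 = idm i i0" for i using iU insert.hyps(2) by (simp add: idout_def)
    have eH': "H' = udiag U'' d"
    proof (rule ext, rule ext)
      fix i j
      have "udiag U'' d i j = H'' i j + U'' i i0 * complex_of_real l * cnj (U'' j i0)"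
        unfolding d_def udiag_upd eH'' using d0 insert.hyps(2) by simp
      also have "\<dots> = H' i j" unfolding Ui0 H''_def using col row
        by (auto simp: idm_def)
      finally show "H' i j = udiag U'' d i j" by simp
    qed
    have "H = rmul Q (rmul H' Q)" unfolding H'_def
      by (simp add: rmul_assoc[symmetric] QQ) (simp add: rmul_assoc QQ)
    also have "\<dots> = udiag (rmul Q U'') d"
      unfolding eH' using udiag_conj[of Q U'' d] hQ by (simp add: herm_def)
    finally have eH: "H = udiag (rmul Q U'') d" .
    have uQ: "unitary Q" using hQ QQ by (simp add: unitary_def herm_def)
    have iU': "idout ?I U''" using iU by (auto simp: idout_def)
    show "\<exists>U d. unitary U \<and> idout ?I U \<and> (\<forall>k. k \<notin> ?I \<longrightarrow> d k = 0) \<and> H = udiag U d"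
      using unitary_mult[OF uQ uU] idout_rmul[OF iQ' iU'] eH d0
      by (intro exI[of _ "rmul Q U''"] exI[of _ d]) (auto simp: d_def)
  qed
qed

theorem spectral:
  fixes H :: "'x::finite qop"
  assumes "herm H"
  shows "\<exists>U d. unitary U \<and> H = udiag U d"
  using spectral_supp[of UNIV] assms unfolding zout_def by blast

lemma cnj_if0: "cnj (if P then x else 0) = (if P then cnj x else 0)" by simp

lemma quad_two:
  "cinner (\<lambda>k. a * idm k i + b * idm k j) (mv X (\<lambda>k. a * idm k i + b * idm k j)) =
   cnj a * a * X i i + cnj a * b * X i j + cnj b * a * X j i + cnj b * b * X j j"
  by (simp add: cinner_def mv_def algebra_simps sum.distrib idm_def if_0_mult mult_if_0 cnj_if0)

lemma psd_herm:
  assumes "psd X" shows "herm X"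
proof -
  have r: "Im (cinner v (mv X v)) = 0" for v using assms by (simp add: psd_iff complex_is_Real_iff)
  have xs: "X j i = cnj (X i j)" for i j
  proof -
    have 1: "Im (X i i) = 0" for i using r[of "\<lambda>k. 1 * idm k i + 0 * idm k i"] unfolding quad_two by simp
    have 2: "Im (X i j + X j i) = 0" using r[of "\<lambda>k. 1 * idm k i + 1 * idm k j"] 1[of i] 1[of j]
      unfolding quad_two by simp
    have 3: "Re (X i j - X j i) = 0" using r[of "\<lambda>k. 1 * idm k i + \<i> * idm k j"] 1[of i] 1[of j]
      unfolding quad_two by simp
    show ?thesis using 2 3 by (simp add: complex_eq_iff)
  qed
  have "radj X = X" unfolding radj_def by (rule ext, rule ext, subst xs, simp)
  thus ?thesis by (simp add: herm_def)
qed

definition col :: "('x \<Rightarrow> 'x \<Rightarrow> complex) \<Rightarrow> 'x \<Rightarrow> 'x \<Rightarrow> complex" where "col U k = (\<lambda>i. U i k)"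

lemma mv_dg: "mv (dg d) c = (\<lambda>k. complex_of_real (d k) * c k)"
  by (simp add: mv_def dg_def if_0_mult)

lemma quad_dg: "cinner c (mv (dg d) c) = (\<Sum>k\<in>UNIV. complex_of_real (d k * (cmod (c k))\<^sup>2))"
proof -
  have e: "cnj (c k) * (complex_of_real (d k) * c k) = complex_of_real (d k * (cmod (c k))\<^sup>2)" for k
    by (simp only: of_real_mult complex_norm_square) (simp add: mult_ac)
  show ?thesis unfolding mv_dg cinner_def e ..
qed

lemma mv_radj_col: "mv (radj U) v = (\<lambda>k. cinner (col U k) v)"
  by (simp add: mv_def radj_def cinner_def col_def)

lemma quad_udiag:
  "cinner v (mv (udiag U d) v) = (\<Sum>k\<in>UNIV. complex_of_real (d k * (cmod (cinner (col U k) v))\<^sup>2))"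
  unfolding udiag_rmul mv_rmul cinner_mv[of v U] quad_dg mv_radj_col ..

lemma col_orth: "unitary U \<Longrightarrow> cinner (col U j) (col U k) = idm j k"
  unfolding unitary_def
  by (drule conjunct1, drule fun_cong[where x=j], drule fun_cong[where x=k])
     (simp add: rmul_def radj_def cinner_def col_def)

lemma dg_one: "dg (\<lambda>_. 1) = idm" by (simp add: dg_def idm_def fun_eq_iff)

lemma udiag_one: "unitary U \<Longrightarrow> udiag U (\<lambda>_. 1) = idm"
  by (simp add: udiag_rmul dg_one unitary_def)

lemma parseval: "unitary U \<Longrightarrow> (\<Sum>k\<in>UNIV. (cmod (cinner (col U k) v))\<^sup>2) = Re (cinner v v)"
  using quad_udiag[of v U "\<lambda>_. 1"] by (simp add: udiag_one)

lemma quad_udiag_Re: "cinner v (mv (udiag U d) v) = complex_of_real (\<Sum>k\<in>UNIV. d k * (cmod (cinner (col U k) v))\<^sup>2)"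
  unfolding quad_udiag of_real_sum ..

lemma psd_udiag: "(\<And>k. 0 \<le> d k) \<Longrightarrow> psd (udiag U d)"
  unfolding psd_iff quad_udiag_Re by (simp add: sum_nonneg)

lemma psd_udiag_nonneg: assumes "unitary U" "psd (udiag U d)" shows "0 \<le> d k"
proof -
  have "cinner (col U k) (mv (udiag U d) (col U k)) = complex_of_real (d k)"
  proof -
    have e: "d x * (cmod (idm x k))\<^sup>2 = (if x = k then d k else 0)" for x by (simp add: idm_def)
    show ?thesis unfolding quad_udiag_Re col_orth[OF assms(1)] e by simp
  qed
  thus ?thesis using assms(2) unfolding psd_iff by (metis Re_complex_of_real)
qed

lemma rmul_dg_dg: "rmul (dg a) (dg b) = dg (\<lambda>k. a k * b k)"
  by (simp add: rmul_def dg_def fun_eq_iff if_0_mult mult_if_0)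

lemma rmul_dg_right: "rmul Q (dg e) = (\<lambda>i j. Q i j * complex_of_real (e j))"
  by (simp add: rmul_def dg_def fun_eq_iff mult_if_0)
lemma rmul_dg_left: "rmul (dg e) Q = (\<lambda>i j. complex_of_real (e i) * Q i j)"
  by (simp add: rmul_def dg_def fun_eq_iff if_0_mult)

lemma udiag_mult: "unitary U \<Longrightarrow> rmul (udiag U a) (udiag U b) = udiag U (\<lambda>k. a k * b k)"
  unfolding udiag_rmul unitary_def
  by (simp add: rmul_assoc) (simp add: rmul_assoc[symmetric] rmul_dg_dg)

lemma psd_sqrt_ex: assumes "psd A" shows "\<exists>S. psd S \<and> rmul S S = A"
proof -
  obtain U d where U: "unitary U" and A: "A = udiag U d" using spectral[OF psd_herm[OF assms]] by blast
  have d0: "0 \<le> d k" for k using psd_udiag_nonneg[OF U] assms A by simp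
  show ?thesis
    by (intro exI[of _ "udiag U (\<lambda>k. sqrt (d k))"])
       (simp add: psd_udiag udiag_mult[OF U] A d0)
qed

lemma psd_sqrt_unique_aux:
  assumes U: "unitary U" and d0: "\<And>k. 0 \<le> d k" and S: "psd S" and SS: "rmul S S = udiag U d"
  shows "S = udiag U (\<lambda>k. sqrt (d k))"
proof -
  obtain V e where V: "unitary V" and Se: "S = udiag V e" using spectral[OF psd_herm[OF S]] by blast
  have e0: "0 \<le> e k" for k using psd_udiag_nonneg[OF V] S Se by simp
  define Q where "Q = rmul (radj U) V"
  have eq: "udiag V (\<lambda>k. e k * e k) = udiag U d" using SS unfolding Se udiag_mult[OF V] .
  have "rmul (rmul (radj U) (udiag V (\<lambda>k. e k * e k))) V = rmul (rmul (radj U) (udiag U d)) V"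
    unfolding eq ..
  hence "rmul Q (dg (\<lambda>k. e k * e k)) = rmul (dg d) Q"
    using U V unfolding Q_def udiag_rmul unitary_def
    by (simp add: rmul_assoc) (simp add: rmul_assoc[symmetric])
  hence qe: "Q i j * complex_of_real (e j * e j) = complex_of_real (d i) * Q i j" for i j
    unfolding rmul_dg_right rmul_dg_left by (drule_tac fun_cong[where x=i], drule_tac fun_cong[where x=j]) simp
  have qe2: "Q i j * complex_of_real (e j) = complex_of_real (sqrt (d i)) * Q i j" for i j
  proof (cases "Q i j = 0")
    case False
    have "Q i j * (complex_of_real (e j * e j) - complex_of_real (d i)) = 0"
      using qe[of i j] by (simp add: algebra_simps del: of_real_mult)
    hence "complex_of_real (e j * e j) - complex_of_real (d i) = 0" using False by simp
    hence "e j * e j = d i" by (simp del: of_real_mult flip: of_real_diff)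
    hence "sqrt (d i) = \<bar>e j\<bar>" using real_sqrt_abs2[of "e j"] by simp
    hence "e j = sqrt (d i)" using e0[of j] by simp
    thus ?thesis by (simp add: mult.commute)
  qed simp
  hence Qe: "rmul Q (dg e) = rmul (dg (\<lambda>k. sqrt (d k))) Q"
    unfolding rmul_dg_right rmul_dg_left by (simp add: fun_eq_iff)
  have VUQ: "V = rmul U Q" using U unfolding Q_def unitary_def by (simp add: rmul_assoc[symmetric])
  have "S = rmul (rmul (rmul U Q) (dg e)) (radj V)" unfolding Se udiag_rmul VUQ[symmetric] ..
  also have "\<dots> = rmul (rmul U (rmul (dg (\<lambda>k. sqrt (d k))) Q)) (radj V)"
    by (simp add: rmul_assoc Qe)
  also have "\<dots> = udiag U (\<lambda>k. sqrt (d k))"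
    using V unfolding Q_def udiag_rmul unitary_def by (simp add: rmul_assoc)
  finally show ?thesis .
qed

lemma psd_sqrt_unique:
  assumes "psd A" "psd S1" "rmul S1 S1 = A" "psd S2" "rmul S2 S2 = A"
  shows "S1 = S2"
proof -
  obtain U d where U: "unitary U" and A: "A = udiag U d" using spectral[OF psd_herm[OF assms(1)]] by blast
  have d0: "0 \<le> d k" for k using psd_udiag_nonneg[OF U] assms(1) A by simp
  show ?thesis using psd_sqrt_unique_aux[OF U d0 assms(2)] psd_sqrt_unique_aux[OF U d0 assms(4)] assms(3,5) A
    by simp
qed

lemma psd_gram: "psd (rmul (radj X) (X::'x::finite qop))"
proof -
  have "cinner v (mv (rmul (radj X) X) v) = cinner (mv X v) (mv X v)" for v
    unfolding mv_rmul cinner_mv[of v "radj X"] radj_radj ..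
  thus ?thesis unfolding psd_iff using cinner_self[of "mv X v" for v] cinner_self_ge0
    by (metis Reals_of_real)
qed

lemma abs_op_char: "psd (abs_op X) \<and> rmul (abs_op X) (abs_op X) = rmul (radj X) X"
proof -
  obtain S where S: "psd S \<and> rmul S S = rmul (radj X) X" using psd_sqrt_ex[OF psd_gram[of X]] by blast
  have "\<exists>!S. psd S \<and> rmul S S = rmul (radj X) X"
    using S psd_sqrt_unique[OF psd_gram[of X]] by blast
  hence "psd (THE S. psd S \<and> rmul S S = rmul (radj X) X) \<and>
         rmul (THE S. psd S \<and> rmul S S = rmul (radj X) X) (THE S. psd S \<and> rmul S S = rmul (radj X) X) = rmul (radj X) X"
    by (rule theI')
  thus ?thesis unfolding abs_op_def mmult_rmul adj_radj .
qed

lemma abs_op_eq: "psd S \<Longrightarrow> rmul S S = rmul (radj X) X \<Longrightarrow> abs_op X = S"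
  using abs_op_char[of X] psd_sqrt_unique[OF psd_gram[of X]] by blast

lemma qtrace_dg: "qtrace (dg a) = (\<Sum>k\<in>UNIV. complex_of_real (a k))"
  by (simp add: qtrace_def dg_def)

lemma qtrace_udiag: "unitary U \<Longrightarrow> qtrace (udiag U a) = (\<Sum>k\<in>UNIV. complex_of_real (a k))"
  unfolding udiag_rmul unitary_def
  by (subst trace_cyclic) (simp add: rmul_assoc[symmetric] qtrace_dg)

lemma radj_udiag: "radj (udiag U d) = udiag U d" using herm_udiag[of U d] by (simp add: herm_def)

lemma tn_udiag: assumes U: "unitary U" shows "trace_norm (udiag U d) = (\<Sum>k\<in>UNIV. \<bar>d k\<bar>)"
proof -
  have "abs_op (udiag U d) = udiag U (\<lambda>k. \<bar>d k\<bar>)"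
    by (rule abs_op_eq) (simp_all add: psd_udiag radj_udiag udiag_mult[OF U] abs_mult_self_eq)
  thus ?thesis by (simp add: trace_norm_def qtrace_udiag[OF U] Re_sum)
qed

definition ctr :: "('x::finite) qop \<Rightarrow> bool" where
  "ctr W \<longleftrightarrow> herm W \<and> (\<forall>v. \<bar>Re (cinner v (mv W v))\<bar> \<le> Re (cinner v v))"

lemma qtrace_rmul_dg: "qtrace (rmul M (dg d)) = (\<Sum>k\<in>UNIV. M k k * complex_of_real (d k))"
  by (simp add: qtrace_def rmul_dg_right)

lemma trace_W_udiag:
  "qtrace (rmul W (udiag U d)) = (\<Sum>k\<in>UNIV. cinner (col U k) (mv W (col U k)) * complex_of_real (d k))"
proof -
  have "qtrace (rmul W (udiag U d)) = qtrace (rmul (rmul W (rmul U (dg d))) (radj U))"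
    by (simp add: udiag_rmul rmul_assoc)
  also have "\<dots> = qtrace (rmul (radj U) (rmul W (rmul U (dg d))))" by (rule trace_cyclic)
  also have "\<dots> = qtrace (rmul (rmul (radj U) (rmul W U)) (dg d))" by (simp add: rmul_assoc)
  also have "\<dots> = (\<Sum>k\<in>UNIV. cinner (col U k) (mv W (col U k)) * complex_of_real (d k))"
    unfolding qtrace_rmul_dg by (simp add: rmul_def radj_def cinner_def mv_def col_def sum_distrib_left)
  finally show ?thesis .
qed

lemma ctr_quad: assumes "ctr W" shows "Re (cinner v (mv W v) * complex_of_real c) \<le> \<bar>c\<bar> * Re (cinner v v)"
proof -
  have "Re (cinner v (mv W v) * complex_of_real c) = c * Re (cinner v (mv W v))" by simp
  also have "\<dots> \<le> \<bar>c\<bar> * \<bar>Re (cinner v (mv W v))\<bar>" by (simp add: abs_mult[symmetric])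
  also have "\<dots> \<le> \<bar>c\<bar> * Re (cinner v v)" using assms by (simp add: ctr_def mult_left_mono)
  finally show ?thesis .
qed

lemma tn_herm_ge: assumes h: "herm X" and W: "ctr W" shows "Re (qtrace (rmul W X)) \<le> trace_norm X"
proof -
  obtain U d where U: "unitary U" and X: "X = udiag U d" using spectral[OF h] by blast
  have "Re (qtrace (rmul W X)) = (\<Sum>k\<in>UNIV. Re (cinner (col U k) (mv W (col U k)) * complex_of_real (d k)))"
    unfolding X trace_W_udiag by simp
  also have "\<dots> \<le> (\<Sum>k\<in>UNIV. \<bar>d k\<bar>)"
  proof (rule sum_mono)
    fix k
    have "Re (cinner (col U k) (mv W (col U k)) * complex_of_real (d k)) \<le> \<bar>d k\<bar> * Re (cinner (col U k) (col U k))"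
      by (rule ctr_quad[OF W])
    thus "Re (cinner (col U k) (mv W (col U k)) * complex_of_real (d k)) \<le> \<bar>d k\<bar>"
      using col_orth[OF U, of k k] by (simp add: idm_def)
  qed
  finally show ?thesis unfolding X tn_udiag[OF U] .
qed

lemma tn_herm_attain: assumes h: "herm X" shows "\<exists>W. ctr W \<and> Re (qtrace (rmul W X)) = trace_norm X"
proof -
  obtain U d where U: "unitary U" and X: "X = udiag U d" using spectral[OF h] by blast
  define W where "W = udiag U (\<lambda>k. sgn (d k))"
  have "ctr W"
  proof -
    have "\<bar>Re (cinner v (mv W v))\<bar> \<le> Re (cinner v v)" for v
    proof -
      have "\<bar>Re (cinner v (mv W v))\<bar> = \<bar>\<Sum>k\<in>UNIV. sgn (d k) * (cmod (cinner (col U k) v))\<^sup>2\<bar>"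
        unfolding W_def quad_udiag_Re by simp
      also have "\<dots> \<le> (\<Sum>k\<in>UNIV. \<bar>sgn (d k) * (cmod (cinner (col U k) v))\<^sup>2\<bar>)" by (rule sum_abs)
      also have "\<dots> \<le> (\<Sum>k\<in>UNIV. (cmod (cinner (col U k) v))\<^sup>2)"
        by (rule sum_mono) (simp add: abs_mult abs_sgn_eq)
      also have "\<dots> = Re (cinner v v)" by (rule parseval[OF U])
      finally show ?thesis .
    qed
    thus ?thesis unfolding ctr_def W_def using herm_udiag by blast
  qed
  moreover have "Re (qtrace (rmul W X)) = trace_norm X"
  proof -
    have "rmul W X = udiag U (\<lambda>k. \<bar>d k\<bar>)"
    proof -
      have "(\<lambda>k. sgn (d k) * d k) = (\<lambda>k. \<bar>d k\<bar>)" by (auto simp: fun_eq_iff abs_if sgn_if)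
      thus ?thesis unfolding W_def X udiag_mult[OF U] by simp
    qed
    thus ?thesis unfolding X tn_udiag[OF U] by (simp add: qtrace_udiag[OF U] Re_sum)
  qed
  ultimately show ?thesis by blast
qed

lemma tn_psd: assumes "psd P" shows "trace_norm P = Re (qtrace P)"
proof -
  obtain U d where U: "unitary U" and P: "P = udiag U d" using spectral[OF psd_herm[OF assms]] by blast
  have d0: "0 \<le> d k" for k using psd_udiag_nonneg[OF U] assms P by simp
  show ?thesis unfolding P tn_udiag[OF U] qtrace_udiag[OF U] using d0 by (simp flip: of_real_sum)
qed

lemma ctr_idm: "ctr idm" by (simp add: ctr_def herm_def cinner_self_ge0)

lemma tn_herm_ge_trace: "herm X \<Longrightarrow> Re (qtrace X) \<le> trace_norm X"
  using tn_herm_ge[OF _ ctr_idm] by simp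

lemma qtrace_comb: "qtrace (\<lambda>i j. \<Sum>k\<in>K. c k * X k i j) = (\<Sum>k\<in>K. c k * qtrace (X k))"
  unfolding qtrace_def by (simp add: sum_distrib_left) (rule sum.swap)

lemma rmul_comb: "rmul W (\<lambda>i j. \<Sum>k\<in>K. c k * X k i j) = (\<lambda>i j. \<Sum>k\<in>K. c k * rmul W (X k) i j)"
  unfolding rmul_def by (simp add: sum_distrib_left mult_ac fun_eq_iff) (intro allI, rule sum.swap)

lemma tn_comb:
  assumes hs: "herm (\<lambda>i j. \<Sum>k\<in>K. complex_of_real (c k) * X k i j)"
    and hX: "\<And>k. k \<in> K \<Longrightarrow> herm (X k)"
  shows "trace_norm (\<lambda>i j. \<Sum>k\<in>K. complex_of_real (c k) * X k i j) \<le> (\<Sum>k\<in>K. \<bar>c k\<bar> * trace_norm (X k))"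
proof -
  obtain W where W: "ctr W" and eq: "Re (qtrace (rmul W (\<lambda>i j. \<Sum>k\<in>K. complex_of_real (c k) * X k i j))) =
      trace_norm (\<lambda>i j. \<Sum>k\<in>K. complex_of_real (c k) * X k i j)"
    using tn_herm_attain[OF hs] by blast
  have "Re (qtrace (rmul W (\<lambda>i j. \<Sum>k\<in>K. complex_of_real (c k) * X k i j))) =
        (\<Sum>k\<in>K. c k * Re (qtrace (rmul W (X k))))"
    unfolding rmul_comb qtrace_comb by (simp add: Re_sum)
  also have "\<dots> \<le> (\<Sum>k\<in>K. \<bar>c k\<bar> * trace_norm (X k))"
  proof (rule sum_mono)
    fix k assume k: "k \<in> K"
    have "ctr (\<lambda>i j. - W i j)" using W
      by (simp add: ctr_def herm_def radj_def fun_eq_iff mv_def cinner_def sum_negf)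
    hence m: "Re (qtrace (rmul (\<lambda>i j. - W i j) (X k))) \<le> trace_norm (X k)"
      by (rule tn_herm_ge[OF hX[OF k]])
    have p: "Re (qtrace (rmul W (X k))) \<le> trace_norm (X k)" by (rule tn_herm_ge[OF hX[OF k] W])
    have "qtrace (rmul (\<lambda>i j. - W i j) (X k)) = - qtrace (rmul W (X k))"
      by (simp add: qtrace_def rmul_def sum_negf)
    hence "\<bar>Re (qtrace (rmul W (X k)))\<bar> \<le> trace_norm (X k)" using m p by simp
    thus "c k * Re (qtrace (rmul W (X k))) \<le> \<bar>c k\<bar> * trace_norm (X k)"
      by (metis abs_ge_self abs_mult abs_ge_zero mult_left_mono order_trans)
  qed
  finally show ?thesis using eq by simp
qed

lemma lin_add: "linear_qmap \<Phi> \<Longrightarrow> \<Phi> (\<lambda>i j. X i j + Y i j) = (\<lambda>i j. \<Phi> X i j + \<Phi> Y i j)"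
  by (simp add: linear_qmap_def)
lemma lin_scale: "linear_qmap \<Phi> \<Longrightarrow> \<Phi> (\<lambda>i j. c * X i j) = (\<lambda>i j. c * \<Phi> X i j)"
  by (simp add: linear_qmap_def)
lemma lin_zero: assumes "linear_qmap \<Phi>" shows "\<Phi> (\<lambda>_ _. 0) = (\<lambda>_ _. 0)"
  using lin_scale[OF assms, of 0 "\<lambda>_ _. 0"] by simp

lemma lin_comb:
  assumes L: "linear_qmap \<Phi>" and K: "finite K"
  shows "\<Phi> (\<lambda>i j. \<Sum>k\<in>K. c k * X k i j) = (\<lambda>i j. \<Sum>k\<in>K. c k * \<Phi> (X k) i j)"
  using K
proof (induction K rule: finite_induct)
  case empty thus ?case using lin_zero[OF L] by simp
next
  case (insert a K)
  have "\<Phi> (\<lambda>i j. \<Sum>k\<in>insert a K. c k * X k i j) = \<Phi> (\<lambda>i j. c a * X a i j + (\<Sum>k\<in>K. c k * X k i j))"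
    using insert.hyps by simp
  also have "\<dots> = (\<lambda>i j. c a * \<Phi> (X a) i j + (\<Sum>k\<in>K. c k * \<Phi> (X k) i j))"
    by (subst lin_add[OF L]) (simp add: lin_scale[OF L] insert.IH)
  also have "\<dots> = (\<lambda>i j. \<Sum>k\<in>insert a K. c k * \<Phi> (X k) i j)" using insert.hyps by simp
  finally show ?case .
qed

lemma lin_id_tensor: "linear_qmap \<Phi> \<Longrightarrow> linear_qmap (id_tensor \<Phi>)"
  unfolding linear_qmap_def id_tensor_def by (simp add: fun_eq_iff)

lemma id_tensor_comp: "id_tensor (\<lambda>X. f (g X)) X = id_tensor f (id_tensor g X)"
  by (simp add: id_tensor_def fun_eq_iff split: prod.splits)

lemma ptrans_ptrans[simp]: "ptrans (ptrans X) = X"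
  by (simp add: ptrans_def fun_eq_iff split: prod.splits)

lemma qtrace_ptrans: "qtrace (ptrans (X::('a::finite \<times> 'b::finite) qop)) = qtrace X"
  unfolding qtrace_def ptrans_def by (simp add: case_prod_beta)

lemma radj_ptrans: "radj (ptrans X) = ptrans (radj X)"
  by (simp add: radj_def ptrans_def fun_eq_iff split: prod.splits)

lemma pt_conj_comp: "pt_conj (\<lambda>X. f (g X)) = (\<lambda>X. pt_conj f (pt_conj g X))"
  by (simp add: pt_conj_def fun_eq_iff)

lemma ptrans_add: "ptrans (\<lambda>i j. X i j + Y i j) = (\<lambda>i j. ptrans X i j + ptrans Y i j)"
  by (simp add: ptrans_def fun_eq_iff)
lemma ptrans_scale: "ptrans (\<lambda>i j. c * X i j) = (\<lambda>i j. c * ptrans X i j)"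
  by (simp add: ptrans_def fun_eq_iff)

lemma lin_ptrans_conj: "linear_qmap \<Phi> \<Longrightarrow> linear_qmap (pt_conj \<Phi>)"
  unfolding linear_qmap_def pt_conj_def ptrans_add ptrans_scale by (simp add: ptrans_add ptrans_scale)

lemma tp_pt_conj: "tp_map \<Phi> \<Longrightarrow> tp_map (pt_conj \<Phi>)"
  unfolding tp_map_def pt_conj_def by (simp add: qtrace_ptrans)

lemma qtrace_prod: "qtrace (X :: ('a::finite \<times> 'b::finite) qop) = (\<Sum>a\<in>UNIV. \<Sum>b\<in>UNIV. X (a,b) (a,b))"
  unfolding qtrace_def by (simp add: sum.cartesian_product)

lemma tp_id_tensor: "tp_map \<Phi> \<Longrightarrow> qtrace (id_tensor \<Phi> (X :: ('r::finite \<times> 'x::finite) qop)) = qtrace X"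
proof -
  assume tp: "tp_map \<Phi>"
  have "qtrace (id_tensor \<Phi> X) = (\<Sum>r\<in>UNIV. qtrace (\<Phi> (\<lambda>x x'. X (r, x) (r, x'))))"
    unfolding qtrace_prod by (simp add: id_tensor_def qtrace_def)
  also have "\<dots> = (\<Sum>r\<in>UNIV. qtrace (\<lambda>x x'. X (r, x) (r, x')))" using tp by (simp add: tp_map_def)
  also have "\<dots> = qtrace X" unfolding qtrace_prod by (simp add: qtrace_def)
  finally show ?thesis .
qed

lemma psd_on_reindex:
  assumes bij: "bij_betw h A B" and P: "psd_on B Y"
  shows "psd_on A (\<lambda>i j. Y (h i) (h j))"
  unfolding psd_on_def
proof
  fix v :: "'a \<Rightarrow> complex"
  define w where "w = (\<lambda>b. v (inv_into A h b))"
  have vw: "v i = w (h i)" if "i \<in> A" for i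
    using that bij by (simp add: w_def bij_betw_def)
  have "(\<Sum>i\<in>A. \<Sum>j\<in>A. cnj (v i) * Y (h i) (h j) * v j) = (\<Sum>i\<in>A. \<Sum>j\<in>A. cnj (w (h i)) * Y (h i) (h j) * w (h j))"
    by (intro sum.cong refl) (simp add: vw)
  also have "\<dots> = (\<Sum>i\<in>A. \<Sum>j\<in>B. cnj (w (h i)) * Y (h i) j * w j)"
    by (intro sum.cong refl sum.reindex_bij_betw[OF bij])
  also have "\<dots> = (\<Sum>i\<in>B. \<Sum>j\<in>B. cnj (w i) * Y i j * w j)"
    by (rule sum.reindex_bij_betw[OF bij, where g = "\<lambda>i. \<Sum>j\<in>B. cnj (w i) * Y i j * w j"])
  finally show "(\<Sum>i\<in>A. \<Sum>j\<in>A. cnj (v i) * Y (h i) (h j) * v j) \<in> \<real> \<and>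
      0 \<le> Re (\<Sum>i\<in>A. \<Sum>j\<in>A. cnj (v i) * Y (h i) (h j) * v j)"
    using P unfolding psd_on_def by simp
qed

lemma psd_on_cong: "(\<And>i j. i \<in> A \<Longrightarrow> j \<in> A \<Longrightarrow> X i j = Y i j) \<Longrightarrow> psd_on A X \<Longrightarrow> psd_on A Y"
  unfolding psd_on_def by (simp cong: sum.cong)

lemma cp_psd:
  fixes \<Phi> :: "'x::finite qop \<Rightarrow> 'y::finite qop"
  assumes cp: "cp_map \<Phi>" and X: "psd (X :: ('r::finite \<times> 'x::finite) qop)"
  shows "psd (id_tensor \<Phi> X)"
proof -
  let ?n = "CARD('r)"
  obtain f :: "'r \<Rightarrow> nat" where f: "bij_betw f UNIV {0..<?n}"
    using ex_bij_betw_finite_nat[of "UNIV :: 'r set"] by auto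
  have f': "bij_betw f UNIV {..<?n}" using f by (simp add: lessThan_atLeast0)
  define g where "g = inv_into UNIV f"
  have g: "bij_betw g {..<?n} UNIV" unfolding g_def by (rule bij_betw_inv_into[OF f'])
  have gf: "g (f r) = r" for r unfolding g_def using f' by (simp add: bij_betw_def)
  define h :: "nat \<times> 'x \<Rightarrow> 'r \<times> 'x" where "h = (\<lambda>(a, x). (g a, x))"
  have fg: "f (g a) = a" if "a \<in> {..<?n}" for a
    unfolding g_def using f' that by (simp add: bij_betw_inv_into_right)
  have gn: "g a \<in> UNIV" for a by simp
  have hb: "bij_betw h ({..<?n} \<times> UNIV) UNIV"
    by (rule bij_betw_byWitness[where f' = "\<lambda>(r, x). (f r, x)"])
       (use f' in \<open>auto simp: h_def gf fg bij_betw_def image_def\<close>)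
  define X' where "X' = (\<lambda>i j. X (h i) (h j))"
  have "psd_on ({..<?n} \<times> UNIV) X'" unfolding X'_def
    by (rule psd_on_reindex[OF hb]) (use X in \<open>simp add: psd_def\<close>)
  hence P: "psd_on ({..<?n} \<times> UNIV) (id_tensor \<Phi> X')" using cp by (simp add: cp_map_def)
  define h' :: "'r \<times> 'y \<Rightarrow> nat \<times> 'y" where "h' = (\<lambda>(r, y). (f r, y))"
  have fn: "f r \<in> {..<?n}" for r using f' by (auto simp: bij_betw_def)
  have hb': "bij_betw h' UNIV ({..<?n} \<times> UNIV)"
    by (rule bij_betw_byWitness[where f' = "\<lambda>(a, y). (g a, y)"])
       (use fn in \<open>auto simp: h'_def gf fg\<close>)
  have "psd_on UNIV (\<lambda>i j. id_tensor \<Phi> X' (h' i) (h' j))" by (rule psd_on_reindex[OF hb' P])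
  moreover have "(\<lambda>i j. id_tensor \<Phi> X' (h' i) (h' j)) = id_tensor \<Phi> X"
    by (simp add: fun_eq_iff id_tensor_def X'_def h'_def h_def gf split: prod.splits)
  ultimately show ?thesis by (simp add: psd_def)
qed

definition positive_map :: "(('x::finite) qop \<Rightarrow> ('y::finite) qop) \<Rightarrow> bool" where
  "positive_map \<Phi> \<longleftrightarrow> (\<forall>P. psd P \<longrightarrow> psd (\<Phi> P))"

definition hp_map :: "('x qop \<Rightarrow> 'y qop) \<Rightarrow> bool" where
  "hp_map \<Phi> \<longleftrightarrow> (\<forall>X. \<Phi> (radj X) = radj (\<Phi> X))"

lemma positive_of_cp:
  fixes \<Phi> :: "'x::finite qop \<Rightarrow> 'y::finite qop"
  assumes cp: "cp_map \<Phi>" shows "positive_map \<Phi>"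
  unfolding positive_map_def
proof (intro allI impI)
  fix P :: "'x qop" assume P: "psd P"
  define X :: "(unit \<times> 'x) qop" where "X = (\<lambda>i j. P (snd i) (snd j))"
  have b1: "bij_betw (snd :: unit \<times> 'x \<Rightarrow> 'x) UNIV UNIV"
    by (rule bij_betw_byWitness[where f' = "\<lambda>x. ((), x)"]) auto
  have "psd X" unfolding X_def psd_def using psd_on_reindex[OF b1, of P] P by (simp add: psd_def)
  hence Y: "psd (id_tensor \<Phi> X)" by (rule cp_psd[OF cp])
  have b2: "bij_betw (\<lambda>y::'y. ((), y)) UNIV UNIV"
    by (rule bij_betw_byWitness[where f' = snd]) auto
  have "psd_on UNIV (\<lambda>i j. id_tensor \<Phi> X ((), i) ((), j))"
    using psd_on_reindex[OF b2, of "id_tensor \<Phi> X"] Y by (simp add: psd_def)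
  moreover have "(\<lambda>i j. id_tensor \<Phi> X ((), i) ((), j)) = \<Phi> P"
    by (simp add: id_tensor_def X_def fun_eq_iff)
  ultimately show "psd (\<Phi> P)" by (simp add: psd_def)
qed

lemma herm_diff: "herm X \<Longrightarrow> herm Y \<Longrightarrow> herm (\<lambda>i j. X i j - Y i j)"
  by (simp add: herm_def radj_def fun_eq_iff)

lemma lin_diff: "linear_qmap \<Phi> \<Longrightarrow> \<Phi> (\<lambda>i j. X i j - Y i j) = (\<lambda>i j. \<Phi> X i j - \<Phi> Y i j)"
proof -
  assume L: "linear_qmap \<Phi>"
  have "(\<lambda>i j. X i j - Y i j) = (\<lambda>i j. X i j + (-1) * Y i j)" by simp
  hence "\<Phi> (\<lambda>i j. X i j - Y i j) = (\<lambda>i j. \<Phi> X i j + (-1) * \<Phi> Y i j)"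
    by (simp only: lin_add[OF L] lin_scale[OF L])
  thus ?thesis by simp
qed

lemma udiag_diff: "udiag U (\<lambda>k. a k - b k) = (\<lambda>i j. udiag U a i j - udiag U b i j)"
  by (simp add: udiag_def fun_eq_iff algebra_simps sum_subtractf)

lemma pos_herm:
  assumes L: "linear_qmap \<Phi>" and P: "positive_map \<Phi>" and h: "herm H"
  shows "herm (\<Phi> H)"
proof -
  obtain U d where U: "unitary U" and H: "H = udiag U d" using spectral[OF h] by blast
  have "H = udiag U (\<lambda>k. max (d k) 0 - max (- d k) 0)" unfolding H by (rule arg_cong[where f="udiag U"]) auto
  also have "\<dots> = (\<lambda>i j. udiag U (\<lambda>k. max (d k) 0) i j - udiag U (\<lambda>k. max (- d k) 0) i j)"
    by (rule udiag_diff)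
  finally have "\<Phi> H = (\<lambda>i j. \<Phi> (udiag U (\<lambda>k. max (d k) 0)) i j - \<Phi> (udiag U (\<lambda>k. max (- d k) 0)) i j)"
    by (simp add: lin_diff[OF L])
  moreover have "herm (\<Phi> (udiag U (\<lambda>k. max (d k) 0)))" "herm (\<Phi> (udiag U (\<lambda>k. max (- d k) 0)))"
    using P psd_udiag[of "\<lambda>k. max (d k) 0" U] psd_udiag[of "\<lambda>k. max (- d k) 0" U]
    by (auto simp: positive_map_def intro: psd_herm)
  ultimately show ?thesis by (simp add: herm_diff)
qed

lemma hp_of_pos:
  assumes L: "linear_qmap \<Phi>" and P: "positive_map \<Phi>"
  shows "hp_map \<Phi>"
  unfolding hp_map_def
proof
  fix X :: "'a qop"
  define H1 where "H1 = (\<lambda>i j. (X i j + cnj (X j i)) / 2)"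
  define H2 where "H2 = (\<lambda>i j. (X i j - cnj (X j i)) / (2 * \<i>))"
  have h1: "herm H1" by (simp add: herm_def radj_def H1_def fun_eq_iff add.commute)
  have h2: "herm H2" by (simp add: herm_def radj_def H2_def fun_eq_iff field_simps)
  have X: "X = (\<lambda>i j. H1 i j + \<i> * H2 i j)" by (simp add: H1_def H2_def fun_eq_iff field_simps)
  have RX: "radj X = (\<lambda>i j. H1 i j + (- \<i>) * H2 i j)" by (simp add: H1_def H2_def radj_def fun_eq_iff field_simps)
  have e1: "cnj (\<Phi> H1 j i) = \<Phi> H1 i j" for i j using pos_herm[OF L P h1] by (rule herm_entry)
  have e2: "cnj (\<Phi> H2 j i) = \<Phi> H2 i j" for i j using pos_herm[OF L P h2] by (rule herm_entry)
  show "\<Phi> (radj X) = radj (\<Phi> X)"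
  proof -
    have a: "\<Phi> (radj X) = (\<lambda>i j. \<Phi> H1 i j + (- \<i>) * \<Phi> H2 i j)"
      unfolding RX by (simp only: lin_add[OF L] lin_scale[OF L])
    have "\<Phi> X = \<Phi> (\<lambda>i j. H1 i j + \<i> * H2 i j)" by (rule arg_cong[OF X])
    hence b: "\<Phi> X = (\<lambda>i j. \<Phi> H1 i j + \<i> * \<Phi> H2 i j)" by (simp only: lin_add[OF L] lin_scale[OF L])
    show ?thesis unfolding a b by (simp add: radj_def fun_eq_iff e1 e2)
  qed
qed

lemma hp_pt_conj: "hp_map \<Phi> \<Longrightarrow> hp_map (pt_conj \<Phi>)"
  unfolding hp_map_def pt_conj_def by (simp flip: radj_ptrans)

lemma hp_id_tensor: "hp_map \<Phi> \<Longrightarrow> hp_map (id_tensor \<Phi>)"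
proof -
  assume hp: "hp_map \<Phi>"
  have e: "\<Phi> (radj Y) y y' = cnj (\<Phi> Y y' y)" for Y y y' using hp by (simp add: hp_map_def radj_def)
  have b: "(\<lambda>x x'. radj X (r, x) (r', x')) = radj (\<lambda>x x'. X (r', x) (r, x'))" for X r r'
    by (simp add: radj_def fun_eq_iff)
  show ?thesis unfolding hp_map_def
    by (simp add: id_tensor_def fun_eq_iff b e split: prod.splits) (simp add: radj_def)
qed

lemma herm_hp: "hp_map \<Phi> \<Longrightarrow> herm X \<Longrightarrow> herm (\<Phi> X)"
  by (simp add: hp_map_def herm_def) (metis)

definition pure :: "('x \<Rightarrow> complex) \<Rightarrow> 'x \<Rightarrow> 'x \<Rightarrow> complex" where
  "pure \<psi> = (\<lambda>a b. \<psi> a * cnj (\<psi> b))"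

lemma psd_pure: "psd (pure (\<psi>::'x::finite \<Rightarrow> complex))"
proof -
  have "cinner v (mv (pure \<psi>) v) = complex_of_real ((cmod (cinner \<psi> v))\<^sup>2)" for v
  proof -
    have "cinner v (mv (pure \<psi>) v) = cnj (cinner \<psi> v) * cinner \<psi> v"
      by (simp add: cinner_def mv_def pure_def sum_distrib_left sum_distrib_right mult_ac) (rule sum.swap)
    thus ?thesis by (simp only: complex_norm_square mult.commute)
  qed
  thus ?thesis unfolding psd_iff by simp
qed

lemma qtrace_pure: "qtrace (pure (\<psi>::'x::finite \<Rightarrow> complex)) = cinner \<psi> \<psi>"
  by (simp add: qtrace_def pure_def cinner_def mult.commute)

lemma udiag_pure: "udiag U d = (\<lambda>i j. \<Sum>k\<in>UNIV. complex_of_real (d k) * pure (col U k) i j)"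
  by (simp add: udiag_def pure_def col_def fun_eq_iff mult_ac)

lemma col_norm: "unitary U \<Longrightarrow> cinner (col U k) (col U k) = 1"
  using col_orth[of U k k] by (simp add: idm_def)

lemma tn_contract:
  fixes A :: "'x::finite qop \<Rightarrow> 'y::finite qop"
  assumes L: "linear_qmap A" and cp: "cp_map A" and tp: "tp_map A"
    and h: "herm (Z :: ('r::finite \<times> 'x) qop)"
  shows "trace_norm (id_tensor A Z) \<le> trace_norm Z"
proof -
  obtain U d where U: "unitary U" and Z: "Z = udiag U d" using spectral[OF h] by blast
  have LI: "linear_qmap (id_tensor A)" by (rule lin_id_tensor[OF L])
  have hpI: "hp_map (id_tensor A)" by (rule hp_id_tensor[OF hp_of_pos[OF L positive_of_cp[OF cp]]])
  have eq: "id_tensor A Z = (\<lambda>i j. \<Sum>k\<in>UNIV. complex_of_real (d k) * id_tensor A (pure (col U k)) i j)"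
    unfolding Z udiag_pure by (rule lin_comb[OF LI finite])
  have hs: "herm (id_tensor A Z)" by (rule herm_hp[OF hpI h])
  have pk: "psd (id_tensor A (pure (col U k)))" for k by (rule cp_psd[OF cp psd_pure])
  have tk: "trace_norm (id_tensor A (pure (col U k))) = 1" for k
    unfolding tn_psd[OF pk] tp_id_tensor[OF tp] qtrace_pure col_norm[OF U] by simp
  have "trace_norm (id_tensor A Z) \<le> (\<Sum>k\<in>UNIV. \<bar>d k\<bar> * trace_norm (id_tensor A (pure (col U k))))"
    unfolding eq by (rule tn_comb) (use hs eq pk psd_herm in auto)
  also have "\<dots> = trace_norm Z" unfolding tk Z tn_udiag[OF U] by simp
  finally show ?thesis .
qed

lemma sum_prod_UNIV: "(\<Sum>x\<in>(UNIV::('a::finite \<times> 'b::finite) set). f x) = (\<Sum>a\<in>UNIV. \<Sum>b\<in>UNIV. f (a, b))"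
  unfolding sum.cartesian_product by simp

lemma sum_bij: "bij (\<pi> :: 'a::finite \<Rightarrow> 'b::finite) \<Longrightarrow> (\<Sum>i\<in>UNIV. f (\<pi> i)) = (\<Sum>a\<in>UNIV. f a)"
  by (rule sum.reindex_bij_betw) (simp add: bij_def bij_betw_def)

lemma tn_reindex_le:
  fixes K :: "'b::finite qop" and \<pi> :: "'a::finite \<Rightarrow> 'b"
  assumes bij: "bij \<pi>" and h: "herm K"
  shows "trace_norm (\<lambda>i j. K (\<pi> i) (\<pi> j)) \<le> trace_norm K"
proof -
  define \<sigma> where "\<sigma> = inv \<pi>"
  have s\<pi>: "\<sigma> (\<pi> i) = i" for i unfolding \<sigma>_def using bij by (simp add: bij_def)
  have h': "herm (\<lambda>i j. K (\<pi> i) (\<pi> j))" using h by (simp add: herm_def radj_def fun_eq_iff)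
  obtain W where W: "ctr W" and eq: "Re (qtrace (rmul W (\<lambda>i j. K (\<pi> i) (\<pi> j)))) = trace_norm (\<lambda>i j. K (\<pi> i) (\<pi> j))"
    using tn_herm_attain[OF h'] by blast
  define W' where "W' = (\<lambda>a b. W (\<sigma> a) (\<sigma> b))"
  have tr: "qtrace (rmul W' K) = qtrace (rmul W (\<lambda>i j. K (\<pi> i) (\<pi> j)))"
  proof -
    have "qtrace (rmul W' K) = (\<Sum>a\<in>UNIV. \<Sum>b\<in>UNIV. W (\<sigma> a) (\<sigma> b) * K b a)"
      by (simp add: qtrace_def rmul_def W'_def)
    also have "\<dots> = (\<Sum>i\<in>UNIV. \<Sum>b\<in>UNIV. W i (\<sigma> b) * K b (\<pi> i))"
      by (rule sum_bij[OF bij, symmetric, where f = "\<lambda>a. \<Sum>b\<in>UNIV. W (\<sigma> a) (\<sigma> b) * K b a", simplified s\<pi>])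
    also have "\<dots> = (\<Sum>i\<in>UNIV. \<Sum>j\<in>UNIV. W i j * K (\<pi> j) (\<pi> i))"
      by (intro sum.cong refl) (rule sum_bij[OF bij, symmetric, where f = "\<lambda>b. W _ (\<sigma> b) * K b (\<pi> _)", simplified s\<pi>])
    finally show ?thesis by (simp add: qtrace_def rmul_def)
  qed
  have "ctr W'"
  proof -
    have hW: "herm W" using W by (simp add: ctr_def)
    have "herm W'" using hW by (simp add: herm_def radj_def W'_def fun_eq_iff)
    moreover have "\<bar>Re (cinner v (mv W' v))\<bar> \<le> Re (cinner v v)" for v
    proof -
      have q: "cinner v (mv W' v) = cinner (\<lambda>i. v (\<pi> i)) (mv W (\<lambda>i. v (\<pi> i)))"
      proof -
        have "cinner v (mv W' v) = (\<Sum>a\<in>UNIV. \<Sum>b\<in>UNIV. cnj (v a) * W (\<sigma> a) (\<sigma> b) * v b)"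
          by (simp add: cinner_def mv_def W'_def sum_distrib_left mult.assoc)
        also have "\<dots> = (\<Sum>i\<in>UNIV. \<Sum>b\<in>UNIV. cnj (v (\<pi> i)) * W i (\<sigma> b) * v b)"
          by (rule sum_bij[OF bij, symmetric, where f = "\<lambda>a. \<Sum>b\<in>UNIV. cnj (v a) * W (\<sigma> a) (\<sigma> b) * v b", simplified s\<pi>])
        also have "\<dots> = (\<Sum>i\<in>UNIV. \<Sum>j\<in>UNIV. cnj (v (\<pi> i)) * W i j * v (\<pi> j))"
          by (intro sum.cong refl) (rule sum_bij[OF bij, symmetric, where f = "\<lambda>b. cnj (v (\<pi> _)) * W _ (\<sigma> b) * v b", simplified s\<pi>])
        finally show ?thesis by (simp add: cinner_def mv_def sum_distrib_left mult.assoc)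
      qed
      have n: "cinner v v = cinner (\<lambda>i. v (\<pi> i)) (\<lambda>i. v (\<pi> i))"
        unfolding cinner_def by (rule sum_bij[OF bij, symmetric])
      show ?thesis unfolding q n using W by (simp add: ctr_def)
    qed
    ultimately show ?thesis by (simp add: ctr_def)
  qed
  hence "Re (qtrace (rmul W' K)) \<le> trace_norm K" by (rule tn_herm_ge[OF h])
  thus ?thesis using tr eq by simp
qed

lemma tn_conj_contr:
  fixes K :: "'q::finite qop" and A :: "'p::finite \<Rightarrow> 'q \<Rightarrow> complex"
  assumes h: "herm K" and c: "\<And>u. Re (cinner (mv A u) (mv A u)) \<le> Re (cinner u u)"
  shows "trace_norm (rmul A (rmul K (radj A))) \<le> trace_norm K"
proof -
  have h': "herm (rmul A (rmul K (radj A)))" using h by (simp add: herm_def radj_rmul rmul_assoc)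
  obtain W where W: "ctr W" and eq: "Re (qtrace (rmul W (rmul A (rmul K (radj A))))) = trace_norm (rmul A (rmul K (radj A)))"
    using tn_herm_attain[OF h'] by blast
  define W' where "W' = rmul (radj A) (rmul W A)"
  have tr: "qtrace (rmul W (rmul A (rmul K (radj A)))) = qtrace (rmul W' K)"
  proof -
    have "qtrace (rmul W (rmul A (rmul K (radj A)))) = qtrace (rmul (rmul (rmul W A) K) (radj A))"
      by (simp add: rmul_assoc)
    also have "\<dots> = qtrace (rmul (radj A) (rmul (rmul W A) K))" by (rule trace_cyclic)
    also have "\<dots> = qtrace (rmul W' K)" by (simp add: W'_def rmul_assoc)
    finally show ?thesis .
  qed
  have "ctr W'"
  proof -
    have hW: "herm W" using W by (simp add: ctr_def)
    have "herm W'" using hW by (simp add: herm_def W'_def radj_rmul rmul_assoc)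
    moreover have "\<bar>Re (cinner v (mv W' v))\<bar> \<le> Re (cinner v v)" for v
    proof -
      have "cinner v (mv W' v) = cinner (mv A v) (mv W (mv A v))"
        unfolding W'_def mv_rmul cinner_mv[of v "radj A"] radj_radj ..
      hence "\<bar>Re (cinner v (mv W' v))\<bar> \<le> Re (cinner (mv A v) (mv A v))" using W by (simp add: ctr_def)
      also have "\<dots> \<le> Re (cinner v v)" by (rule c)
      finally show ?thesis .
    qed
    ultimately show ?thesis by (simp add: ctr_def)
  qed
  hence "Re (qtrace (rmul W' K)) \<le> trace_norm K" by (rule tn_herm_ge[OF h])
  thus ?thesis using tr eq by simp
qed

definition ampl :: "('p \<Rightarrow> 's \<Rightarrow> complex) \<Rightarrow> ('p \<times> 'q) \<Rightarrow> ('s \<times> 'q) \<Rightarrow> complex" where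
  "ampl V = (\<lambda>(r, q) (t, q'). V r t * idm q q')"

lemma mv_ampl: "mv (ampl V) u = (\<lambda>(r, q). mv V (\<lambda>t. u (t, q)) r)"
  by (simp add: fun_eq_iff mv_def ampl_def sum_prod_UNIV idm_def mult_if_0 if_0_mult)

lemma ampl_contr:
  fixes V :: "'p::finite \<Rightarrow> 's::finite \<Rightarrow> complex"
  assumes c: "\<And>u. Re (cinner (mv V u) (mv V u)) \<le> Re (cinner u u)"
  shows "Re (cinner (mv (ampl V) u) (mv (ampl V) (u :: 's \<times> 'q::finite \<Rightarrow> complex))) \<le> Re (cinner u u)"
proof -
  have "Re (cinner (mv (ampl V) u) (mv (ampl V) u)) = (\<Sum>q\<in>UNIV. Re (cinner (mv V (\<lambda>t. u (t, q))) (mv V (\<lambda>t. u (t, q)))))"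
    unfolding mv_ampl cinner_def sum_prod_UNIV Re_sum by (subst sum.swap) simp
  also have "\<dots> \<le> (\<Sum>q\<in>UNIV. Re (cinner (\<lambda>t. u (t, q)) (\<lambda>t. u (t, q))))" by (intro sum_mono c)
  also have "\<dots> = Re (cinner u u)"
    unfolding cinner_def sum_prod_UNIV Re_sum by (subst (2) sum.swap) simp
  finally show ?thesis .
qed

lemma sumsq_tr: "(\<Sum>x\<in>UNIV. (cmod (case x of (a, b) \<Rightarrow> M a b))\<^sup>2) = Re (qtrace (rmul (radj M) (M :: 'a::finite \<Rightarrow> 'b::finite \<Rightarrow> complex)))"
proof -
  have e: "cnj (M a b) * M a b = complex_of_real ((cmod (M a b))\<^sup>2)" for a b
    by (simp only: complex_norm_square mult.commute)
  have "qtrace (rmul (radj M) M) = (\<Sum>b\<in>UNIV. \<Sum>a\<in>UNIV. complex_of_real ((cmod (M a b))\<^sup>2))"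
    by (simp add: qtrace_def rmul_def radj_def e)
  hence "Re (qtrace (rmul (radj M) M)) = (\<Sum>b\<in>UNIV. \<Sum>a\<in>UNIV. (cmod (M a b))\<^sup>2)" by (simp add: Re_sum)
  also have "\<dots> = (\<Sum>x\<in>UNIV. (cmod (case x of (a, b) \<Rightarrow> M a b))\<^sup>2)"
    unfolding sum_prod_UNIV by (subst sum.swap) simp
  finally show ?thesis by simp
qed

lemma pure_factor:
  fixes N :: "'x::finite qop \<Rightarrow> 'y::finite qop" and V :: "'p::finite \<Rightarrow> 's::finite \<Rightarrow> complex"
  assumes L: "linear_qmap N" and Y: "Y = rmul V Phi"
  shows "id_tensor N (pure (\<lambda>(r, s). Y r s)) =
         rmul (ampl V) (rmul (id_tensor N (pure (\<lambda>(t, s). Phi t s))) (radj (ampl V)))"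
proof (rule ext, rule ext)
  fix i j :: "'p \<times> 'y"
  obtain r q where i: "i = (r, q)" by (cases i)
  obtain r' q' where j: "j = (r', q')" by (cases j)
  define B where "B = (\<lambda>(p :: 's \<times> 's) s s'. Phi (fst p) s * cnj (Phi (snd p) s'))"
  define c where "c = (\<lambda>(p :: 's \<times> 's). V r (fst p) * cnj (V r' (snd p)))"
  have blk: "(\<lambda>s s'. Y r s * cnj (Y r' s')) = (\<lambda>s s'. \<Sum>p\<in>UNIV. c p * B p s s')"
    unfolding Y rmul_def c_def B_def sum_prod_UNIV
    by (simp add: fun_eq_iff sum_distrib_left sum_distrib_right mult_ac) (intro allI, rule sum.swap)
  have "id_tensor N (pure (\<lambda>(r, s). Y r s)) i j = N (\<lambda>s s'. Y r s * cnj (Y r' s')) q q'"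
    by (simp add: id_tensor_def pure_def i j)
  also have "\<dots> = (\<Sum>p\<in>UNIV. c p * N (B p) q q')" unfolding blk lin_comb[OF L finite] ..
  also have "\<dots> = (\<Sum>t\<in>UNIV. \<Sum>t'\<in>UNIV. V r t * cnj (V r' t') * N (\<lambda>s s'. Phi t s * cnj (Phi t' s')) q q')"
    unfolding sum_prod_UNIV c_def B_def by simp
  also have "\<dots> = (\<Sum>t\<in>UNIV. V r t * (\<Sum>t'\<in>UNIV. id_tensor N (pure (\<lambda>(t, s). Phi t s)) (t, q) (t', q') * cnj (V r' t')))"
    by (simp add: id_tensor_def pure_def sum_distrib_left mult_ac)
  also have "\<dots> = rmul (ampl V) (rmul (id_tensor N (pure (\<lambda>(t, s). Phi t s))) (radj (ampl V))) i j"
  proof -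
    have a1: "ampl V (r, q) (t, q1) = (if q = q1 then V r t else 0)" for t q1 by (simp add: ampl_def idm_def)
    have a2: "radj (ampl V) (t, q1) (r', q') = (if q' = q1 then cnj (V r' t) else 0)" for t q1
      by (simp add: ampl_def idm_def radj_def)
    show ?thesis unfolding i j rmul_def sum_prod_UNIV a1 a2
      by (simp add: if_0_mult mult_if_0)
  qed
  finally show "id_tensor N (pure (\<lambda>(r, s). Y r s)) i j =
         rmul (ampl V) (rmul (id_tensor N (pure (\<lambda>(t, s). Phi t s))) (radj (ampl V))) i j" .
qed

lemma psd_gram': "psd (rmul (radj X) (X::'p::finite \<Rightarrow> 'x::finite \<Rightarrow> complex))"
proof -
  have "cinner v (mv (rmul (radj X) X) v) = cinner (mv X v) (mv X v)" for v
    unfolding mv_rmul cinner_mv[of v "radj X"] radj_radj ..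
  thus ?thesis unfolding psd_iff using cinner_self[of "mv X v" for v] cinner_self_ge0
    by (metis Reals_of_real)
qed

lemma ref_reduce:
  fixes N :: "'x::finite qop \<Rightarrow> 'y::finite qop" and y :: "'p::finite \<times> 'x \<Rightarrow> complex"
  assumes L: "linear_qmap N" and hp: "hp_map N" and ny: "(\<Sum>k\<in>UNIV. (cmod (y k))\<^sup>2) = 1"
  shows "\<exists>\<phi> :: 'x \<times> 'x \<Rightarrow> complex. (\<Sum>k\<in>UNIV. (cmod (\<phi> k))\<^sup>2) = 1 \<and>
            trace_norm (id_tensor N (pure y)) \<le> trace_norm (id_tensor N (pure \<phi>))"
proof -
  define Y where "Y = (\<lambda>r s. y (r, s))"
  have yY: "y = (\<lambda>(r, s). Y r s)" by (simp add: Y_def fun_eq_iff)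
  define G where "G = rmul (radj Y) Y"
  obtain U g where U: "unitary U" and G: "G = udiag U g"
    using spectral[OF psd_herm[OF psd_gram'[of Y]]] unfolding G_def[symmetric] by blast
  have g0: "0 \<le> g k" for k using psd_udiag_nonneg[OF U] psd_gram'[of Y] unfolding G_def[symmetric] G by blast
  define Phi where "Phi = udiag U (\<lambda>k. sqrt (g k))"
  define ginv where "ginv = (\<lambda>k. if g k = 0 then 0 else 1 / sqrt (g k))"
  define p where "p = (\<lambda>k. if g k = 0 then 0 else (1::real))"
  define V where "V = rmul Y (udiag U ginv)"
  have gp1: "(\<lambda>k. ginv k * sqrt (g k)) = p"
    using g0 by (auto simp: fun_eq_iff ginv_def p_def)
  have gp2: "(\<lambda>k. ginv k * (g k * ginv k)) = p"
  proof
    fix k show "ginv k * (g k * ginv k) = p k"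
    proof (cases "g k = 0")
      case False
      hence "sqrt (g k) * sqrt (g k) = g k" using g0[of k] by simp
      thus ?thesis using False g0[of k] by (simp add: ginv_def p_def field_simps)
    qed (simp add: ginv_def p_def)
  qed
  have YUYU: "rmul (radj (rmul Y U)) (rmul Y U) = dg g"
  proof -
    have "rmul (radj (rmul Y U)) (rmul Y U) = rmul (radj U) (rmul G U)"
      by (simp add: radj_rmul rmul_assoc G_def)
    also have "\<dots> = dg g" using U unfolding G udiag_rmul unitary_def
      by (simp add: rmul_assoc) (simp add: rmul_assoc[symmetric])
    finally show ?thesis .
  qed
  have col0: "rmul Y U r k = 0" if gk: "g k = 0" for r k
  proof -
    define Z where "Z = rmul Y U"
    have e: "cnj (Z r' k) * Z r' k = complex_of_real ((cmod (Z r' k))\<^sup>2)" for r'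
      by (simp only: complex_norm_square mult.commute)
    have "rmul (radj Z) Z k k = 0" unfolding Z_def YUYU using gk by (simp add: dg_def)
    moreover have "rmul (radj Z) Z k k = (\<Sum>r'\<in>UNIV. complex_of_real ((cmod (Z r' k))\<^sup>2))"
      unfolding rmul_def radj_def e ..
    ultimately have "(\<Sum>r'\<in>UNIV. (cmod (Z r' k))\<^sup>2) = 0" by (simp only: of_real_sum[symmetric] of_real_eq_0_iff)
    hence "(cmod (Z r k))\<^sup>2 = 0" by (subst (asm) sum_nonneg_eq_0_iff) auto
    thus ?thesis unfolding Z_def by simp
  qed
  have VPhi: "rmul V Phi = Y"
  proof -
    have "rmul V Phi = rmul Y (udiag U p)"
      unfolding V_def Phi_def by (simp add: rmul_assoc udiag_mult[OF U] gp1)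
    also have "\<dots> = rmul (rmul (rmul Y U) (dg p)) (radj U)" by (simp add: udiag_rmul rmul_assoc)
    also have "rmul (rmul Y U) (dg p) = rmul Y U"
      unfolding rmul_dg_right by (auto simp: fun_eq_iff p_def col0)
    also have "rmul (rmul Y U) (radj U) = Y" using U by (simp add: rmul_assoc unitary_def)
    finally show ?thesis .
  qed
  have Vc: "Re (cinner (mv V u) (mv V u)) \<le> Re (cinner u u)" for u
  proof -
    have "rmul (radj V) V = rmul (udiag U ginv) (rmul G (udiag U ginv))"
      unfolding V_def G_def radj_rmul radj_udiag by (simp add: rmul_assoc)
    also have "\<dots> = udiag U p" by (simp add: G udiag_mult[OF U] gp2)
    finally have VV: "rmul (radj V) V = udiag U p" .
    have "cinner (mv V u) (mv V u) = cinner u (mv (rmul (radj V) V) u)"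
      unfolding mv_rmul cinner_mv[of u "radj V"] radj_radj ..
    hence "Re (cinner (mv V u) (mv V u)) = (\<Sum>k\<in>UNIV. p k * (cmod (cinner (col U k) u))\<^sup>2)"
      unfolding VV quad_udiag_Re by simp
    also have "\<dots> \<le> (\<Sum>k\<in>UNIV. (cmod (cinner (col U k) u))\<^sup>2)"
      by (rule sum_mono) (simp add: p_def)
    also have "\<dots> = Re (cinner u u)" by (rule parseval[OF U])
    finally show ?thesis .
  qed
  define \<phi> where "\<phi> = (\<lambda>(t, s). Phi t s)"
  have n\<phi>: "(\<Sum>k\<in>UNIV. (cmod (\<phi> k))\<^sup>2) = 1"
  proof -
    have "(\<Sum>k\<in>UNIV. (cmod (\<phi> k))\<^sup>2) = Re (qtrace (rmul (radj Phi) Phi))"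
      unfolding \<phi>_def by (rule sumsq_tr)
    also have "rmul (radj Phi) Phi = G"
      unfolding Phi_def radj_udiag udiag_mult[OF U] G using g0 by simp
    also have "Re (qtrace G) = (\<Sum>k\<in>UNIV. (cmod (y k))\<^sup>2)"
      unfolding G_def yY by (rule sumsq_tr[symmetric])
    finally show ?thesis using ny by simp
  qed
  define K where "K = id_tensor N (pure \<phi>)"
  have hK: "herm K" unfolding K_def by (rule herm_hp[OF hp_id_tensor[OF hp] psd_herm[OF psd_pure]])
  have "id_tensor N (pure y) = rmul (ampl V) (rmul K (radj (ampl V)))"
    unfolding yY K_def \<phi>_def by (rule pure_factor[OF L VPhi[symmetric]])
  hence "trace_norm (id_tensor N (pure y)) \<le> trace_norm K"
    using tn_conj_contr[OF hK ampl_contr[OF Vc]] by simp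
  thus ?thesis using n\<phi> unfolding K_def by blast
qed

lemma ext_mem_eval:
  "ext_mem N X ((a, m), (b, n)) ((a2, m2), (b2, n2)) =
   N (\<lambda>i j. X ((fst i, m), (snd i, n)) ((fst j, m2), (snd j, n2))) (a, b) (a2, b2)"
proof -
  have "(\<lambda>(a', b') (a'', b''). X ((a', m), (b', n)) ((a'', m2), (b'', n2))) =
        (\<lambda>i j. X ((fst i, m), (snd i, n)) ((fst j, m2), (snd j, n2)))"
    by (simp add: fun_eq_iff case_prod_beta)
  thus ?thesis by (simp add: ext_mem_def)
qed

lemma fun4_ext:
  assumes "\<And>a m b n a2 m2 b2 n2. F ((a, m), (b, n)) ((a2, m2), (b2, n2)) = G ((a, m), (b, n)) ((a2, m2), (b2, n2))"
  shows "F = G"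
proof (intro ext)
  fix i j
  show "F i j = G i j"
    using assms[of "fst (fst i)" "snd (fst i)" "fst (snd i)" "snd (snd i)"
                   "fst (fst j)" "snd (fst j)" "fst (snd j)" "snd (snd j)"] by simp
qed

lemma ptrans_eval: "ptrans X (x, y) (x', y') = X (x, y') (x', y)" by (simp add: ptrans_def)

lemma ptrans_blk: "ptrans (\<lambda>i j. X ((fst i, m), snd i, n) ((fst j, m2), snd j, n2)) =
   (\<lambda>i j. X ((fst i, m), snd j, n) ((fst j, m2), snd i, n2))"
  by (simp add: ptrans_def fun_eq_iff case_prod_beta)

lemma pt_conj_ext: "pt_conj (ext_mem M) = ext_mem (pt_conj M)"
proof (rule ext)
  fix X
  show "pt_conj (ext_mem M) X = ext_mem (pt_conj M) X"
    by (rule fun4_ext) (simp add: pt_conj_def ext_mem_eval ptrans_eval ptrans_blk)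
qed

lemma lin_ext: assumes L: "linear_qmap N" shows "linear_qmap (ext_mem N)"
  unfolding linear_qmap_def
proof (intro conjI allI)
  fix X Y
  show "ext_mem N (\<lambda>i j. X i j + Y i j) = (\<lambda>i j. ext_mem N X i j + ext_mem N Y i j)"
    by (rule fun4_ext) (simp only: ext_mem_eval lin_add[OF L])
next
  fix c X
  show "ext_mem N (\<lambda>i j. c * X i j) = (\<lambda>i j. c * ext_mem N X i j)"
    by (rule fun4_ext) (simp only: ext_mem_eval lin_scale[OF L])
qed

lemma radj_blk: "(\<lambda>i j. radj X ((fst i, m), snd i, n) ((fst j, m2), snd j, n2)) =
           radj (\<lambda>i j. X ((fst i, m2), snd i, n2) ((fst j, m), snd j, n))"
  by (simp add: radj_def fun_eq_iff)

lemma hp_ext: assumes hp: "hp_map N" shows "hp_map (ext_mem N)"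
  unfolding hp_map_def
proof
  fix X
  have e2: "N (radj Z) u v = cnj (N Z v u)" for Z u v using hp by (simp add: hp_map_def radj_def)
  show "ext_mem N (radj X) = radj (ext_mem N X)"
    by (rule fun4_ext) (simp only: ext_mem_eval radj_blk e2, simp add: radj_def ext_mem_eval)
qed

lemma qtrace_ext_form:
  "qtrace (Z :: (('x::finite \<times> 'm::finite) \<times> ('y::finite \<times> 'n::finite)) qop) =
   (\<Sum>mn\<in>UNIV. \<Sum>ab\<in>UNIV. Z ((fst ab, fst mn), (snd ab, snd mn)) ((fst ab, fst mn), (snd ab, snd mn)))"
proof -
  define \<sigma> :: "('m \<times> 'n) \<times> ('x \<times> 'y) \<Rightarrow> ('x \<times> 'm) \<times> ('y \<times> 'n)"
    where "\<sigma> = (\<lambda>(mn, ab). ((fst ab, fst mn), (snd ab, snd mn)))"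
  have bs: "bij \<sigma>"
    by (rule bij_betw_byWitness[where f' = "\<lambda>((a, m), (b, n)). ((m, n), (a, b))"]) (auto simp: \<sigma>_def)
  show ?thesis
    unfolding qtrace_def sum_bij[OF bs, symmetric, where f = "\<lambda>x. Z x x"] sum_prod_UNIV
    by (simp add: \<sigma>_def)
qed

lemma tp_ext:
  fixes N :: "('ai::finite \<times> 'bi::finite) qop \<Rightarrow> ('ao::finite \<times> 'bo::finite) qop"
  assumes tp: "tp_map N"
  shows "tp_map (ext_mem N :: (('ai \<times> 'am::finite) \<times> ('bi \<times> 'bm::finite)) qop \<Rightarrow> _)"
  unfolding tp_map_def
proof
  fix X :: "(('ai \<times> 'am) \<times> ('bi \<times> 'bm)) qop"
  have "qtrace (ext_mem N X) = (\<Sum>mn\<in>UNIV. \<Sum>ab\<in>UNIV.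
        N (\<lambda>i j. X ((fst i, fst mn), (snd i, snd mn)) ((fst j, fst mn), (snd j, snd mn))) ab ab)"
    unfolding qtrace_ext_form by (simp add: ext_mem_eval)
  also have "\<dots> = (\<Sum>mn\<in>UNIV. qtrace (\<lambda>i j. X ((fst i, fst mn), (snd i, snd mn)) ((fst j, fst mn), (snd j, snd mn))))"
    using tp by (simp add: tp_map_def qtrace_def)
  also have "\<dots> = qtrace X" unfolding qtrace_ext_form by (simp add: qtrace_def)
  finally show "qtrace (ext_mem N X) = qtrace X" .
qed

lemma fun5_ext:
  assumes "\<And>r a m b n r' a2 m2 b2 n2. F (r, ((a, m), (b, n))) (r', ((a2, m2), (b2, n2))) = G (r, ((a, m), (b, n))) (r', ((a2, m2), (b2, n2)))"
  shows "F = G"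
proof (intro ext)
  fix i j
  show "F i j = G i j"
    using assms[of "fst i" "fst (fst (snd i))" "snd (fst (snd i))" "fst (snd (snd i))" "snd (snd (snd i))"
                   "fst j" "fst (fst (snd j))" "snd (fst (snd j))" "fst (snd (snd j))" "snd (snd (snd j))"] by simp
qed

lemma ext_reindex:
  fixes N :: "('ai::finite \<times> 'bi::finite) qop \<Rightarrow> ('ao::finite \<times> 'bo::finite) qop"
    and y :: "'r::finite \<times> (('ai \<times> 'am::finite) \<times> ('bi \<times> 'bm::finite)) \<Rightarrow> complex"
  shows "id_tensor (ext_mem N) (pure y) =
    (\<lambda>i j. id_tensor N (pure (\<lambda>k. y (fst (fst k), ((fst (snd k), fst (snd (fst k))), (snd (snd k), snd (snd (fst k)))))))
       ((fst i, (snd (fst (snd i)), snd (snd (snd i)))), (fst (fst (snd i)), fst (snd (snd i))))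
       ((fst j, (snd (fst (snd j)), snd (snd (snd j)))), (fst (fst (snd j)), fst (snd (snd j)))))"
  by (rule fun5_ext) (simp add: id_tensor_def pure_def ext_mem_eval)

lemma norm_reindex:
  fixes y :: "'r::finite \<times> (('ai::finite \<times> 'am::finite) \<times> ('bi::finite \<times> 'bm::finite)) \<Rightarrow> complex"
  shows "(\<Sum>k\<in>UNIV. (cmod (y (fst (fst k), ((fst (snd k), fst (snd (fst k))), (snd (snd k), snd (snd (fst k)))))))\<^sup>2)
       = (\<Sum>k\<in>UNIV. (cmod (y k))\<^sup>2)"
proof -
  define \<sigma> :: "('r \<times> ('am \<times> 'bm)) \<times> ('ai \<times> 'bi) \<Rightarrow> 'r \<times> (('ai \<times> 'am) \<times> ('bi \<times> 'bm))"
    where "\<sigma> = (\<lambda>k. (fst (fst k), ((fst (snd k), fst (snd (fst k))), (snd (snd k), snd (snd (fst k))))))"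
  have "bij \<sigma>"
    by (rule bij_betw_byWitness[where f' = "\<lambda>i. ((fst i, (snd (fst (snd i)), snd (snd (snd i)))), (fst (fst (snd i)), fst (snd (snd i))))"])
       (auto simp: \<sigma>_def)
  from sum_bij[OF this, where f = "\<lambda>k. (cmod (y k))\<^sup>2"] show ?thesis by (simp add: \<sigma>_def)
qed

lemma bij_pi5:
  "bij (\<lambda>i :: 'r \<times> (('a \<times> 'm) \<times> ('b \<times> 'n)). ((fst i, (snd (fst (snd i)), snd (snd (snd i)))), (fst (fst (snd i)), fst (snd (snd i)))))"
  by (rule bij_betw_byWitness[where f' = "\<lambda>k. (fst (fst k), ((fst (snd k), fst (snd (fst k))), (snd (snd k), snd (snd (fst k)))))"])
     auto

lemma tn_bound: "trace_norm (K :: 'x::finite qop) \<le> (\<Sum>i\<in>UNIV. 1 + (\<Sum>k\<in>UNIV. (cmod (K k i))\<^sup>2))"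
proof -
  define S where "S = abs_op K"
  have pS: "psd S" and SS: "rmul S S = rmul (radj K) K" using abs_op_char[of K] unfolding S_def by auto
  have hS: "herm S" by (rule psd_herm[OF pS])
  have tn: "trace_norm K = (\<Sum>i\<in>UNIV. Re (S i i))" unfolding trace_norm_def S_def[symmetric] qtrace_def by (simp add: Re_sum)
  have "Re (S i i) \<le> 1 + (\<Sum>k\<in>UNIV. (cmod (K k i))\<^sup>2)" for i
  proof -
    have e1: "S i k * S k i = complex_of_real ((cmod (S k i))\<^sup>2)" for k
    proof -
      have "S i k * S k i = cnj (S k i) * S k i" using herm_entry[OF hS, of k i] by simp
      also have "\<dots> = complex_of_real ((cmod (S k i))\<^sup>2)" by (subst complex_norm_square) (rule mult.commute)
      finally show ?thesis .
    qed
    have e2: "cnj (K k i) * K k i = complex_of_real ((cmod (K k i))\<^sup>2)" for k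
      by (subst complex_norm_square) (rule mult.commute)
    have "rmul S S i i = (\<Sum>k\<in>UNIV. complex_of_real ((cmod (S k i))\<^sup>2))"
      unfolding rmul_def e1 ..
    moreover have "rmul (radj K) K i i = (\<Sum>k\<in>UNIV. complex_of_real ((cmod (K k i))\<^sup>2))"
      unfolding rmul_def radj_def e2 ..
    ultimately have eq: "(\<Sum>k\<in>UNIV. (cmod (S k i))\<^sup>2) = (\<Sum>k\<in>UNIV. (cmod (K k i))\<^sup>2)"
      using SS by (simp only: of_real_sum[symmetric] of_real_eq_iff)
    have "(cmod (S i i))\<^sup>2 \<le> (\<Sum>k\<in>UNIV. (cmod (S k i))\<^sup>2)"
      by (rule member_le_sum) auto
    moreover have "Re (S i i) \<le> cmod (S i i)" by (rule complex_Re_le_cmod)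
    moreover have "cmod (S i i) \<le> 1 + (cmod (S i i))\<^sup>2"
    proof -
      have "(cmod (S i i) - 1)\<^sup>2 = (cmod (S i i))\<^sup>2 - 2 * cmod (S i i) + 1" by (simp add: power2_diff)
      thus ?thesis using zero_le_power2[of "cmod (S i i) - 1"] zero_le_power2[of "cmod (S i i)"] by linarith
    qed
    ultimately show ?thesis using eq by linarith
  qed
  thus ?thesis unfolding tn by (rule sum_mono)
qed

definition dset :: "(('c::finite) qop \<Rightarrow> ('d::finite) qop) \<Rightarrow> real set" where
  "dset \<Phi> = {trace_norm (id_tensor \<Phi> (pure \<psi>)) | \<psi> :: 'c \<times> 'c \<Rightarrow> complex. (\<Sum>k\<in>UNIV. (cmod (\<psi> k))\<^sup>2) = 1}"

lemma diamond_dset: "diamond_norm \<Phi> = Sup (dset \<Phi>)"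
  unfolding diamond_norm_def dset_def pure_def ..

lemma mat_expand: fixes B :: "'x::finite \<Rightarrow> 'y::finite \<Rightarrow> complex" shows "B = (\<lambda>x x'. \<Sum>p\<in>UNIV. B (fst p) (snd p) * (idm x (fst p) * idm x' (snd p)))"
  by (simp add: sum_prod_UNIV idm_def fun_eq_iff mult_if_0 if_0_mult)

lemma unit_entry: fixes \<psi> :: "'a::finite \<Rightarrow> complex" shows "(\<Sum>k\<in>UNIV. (cmod (\<psi> k))\<^sup>2) = 1 \<Longrightarrow> cmod (\<psi> a) \<le> 1"
proof -
  assume s: "(\<Sum>k\<in>UNIV. (cmod (\<psi> k))\<^sup>2) = 1"
  have "(cmod (\<psi> a))\<^sup>2 \<le> (\<Sum>k\<in>UNIV. (cmod (\<psi> k))\<^sup>2)" by (rule member_le_sum) auto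
  hence "(cmod (\<psi> a))\<^sup>2 \<le> 1" using s by simp
  thus ?thesis by (simp add: abs_square_le_1)
qed

lemma dset_bdd:
  fixes N :: "'x::finite qop \<Rightarrow> 'y::finite qop"
  assumes L: "linear_qmap N"
  shows "bdd_above (dset N)"
proof -
  define E :: "'x \<times> 'x \<Rightarrow> 'x qop" where "E = (\<lambda>p a b. idm a (fst p) * idm b (snd p))"
  define C where "C = (\<lambda>q q'. \<Sum>p\<in>UNIV. cmod (N (E p) q q'))"
  define Bd where "Bd = (\<Sum>i\<in>(UNIV :: ('x \<times> 'y) set). 1 + (\<Sum>k\<in>(UNIV :: ('x \<times> 'y) set). (C (snd k) (snd i))\<^sup>2))"
  have "x \<le> Bd" if "x \<in> dset N" for x
  proof -
    obtain \<psi> :: "'x \<times> 'x \<Rightarrow> complex" where u: "(\<Sum>k\<in>UNIV. (cmod (\<psi> k))\<^sup>2) = 1"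
      and x: "x = trace_norm (id_tensor N (pure \<psi>))" using \<open>x \<in> dset N\<close> unfolding dset_def by blast
    define K where "K = id_tensor N (pure \<psi>)"
    have Kb: "cmod (K k i) \<le> C (snd k) (snd i)" for k i
    proof -
      define B where "B = (\<lambda>x x'. \<psi> (fst k, x) * cnj (\<psi> (fst i, x')))"
      have "K k i = N B (snd k) (snd i)" by (simp add: K_def id_tensor_def pure_def B_def case_prod_beta)
      also have "N B = N (\<lambda>x x'. \<Sum>p\<in>UNIV. B (fst p) (snd p) * E p x x')"
        by (subst mat_expand[of B]) (simp add: E_def)
      also have "\<dots> = (\<lambda>x x'. \<Sum>p\<in>UNIV. B (fst p) (snd p) * N (E p) x x')" by (rule lin_comb[OF L finite])
      finally have "K k i = (\<Sum>p\<in>UNIV. B (fst p) (snd p) * N (E p) (snd k) (snd i))" by simp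
      hence "cmod (K k i) \<le> (\<Sum>p\<in>UNIV. cmod (B (fst p) (snd p)) * cmod (N (E p) (snd k) (snd i)))"
        by (simp add: norm_mult[symmetric] norm_sum)
      also have "\<dots> \<le> (\<Sum>p\<in>UNIV. cmod (N (E p) (snd k) (snd i)))"
      proof (rule sum_mono)
        fix p
        have "cmod (B (fst p) (snd p)) \<le> 1"
          unfolding B_def norm_mult complex_mod_cnj
          using unit_entry[OF u] by (simp add: mult_le_one)
        thus "cmod (B (fst p) (snd p)) * cmod (N (E p) (snd k) (snd i)) \<le> cmod (N (E p) (snd k) (snd i))"
          by (simp add: mult_left_le_one_le)
      qed
      finally show ?thesis by (simp add: C_def)
    qed
    have "x \<le> (\<Sum>i\<in>UNIV. 1 + (\<Sum>k\<in>UNIV. (cmod (K k i))\<^sup>2))" unfolding x K_def[symmetric] by (rule tn_bound)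
    also have "\<dots> \<le> Bd" unfolding Bd_def
    proof (rule sum_mono)
      fix i :: "'x \<times> 'y" assume "i \<in> UNIV"
      have "(\<Sum>k\<in>UNIV. (cmod (K k i))\<^sup>2) \<le> (\<Sum>k\<in>(UNIV :: ('x \<times> 'y) set). (C (snd k) (snd i))\<^sup>2)"
        by (rule sum_mono) (rule power_mono[OF Kb norm_ge_zero])
      thus "1 + (\<Sum>k\<in>UNIV. (cmod (K k i))\<^sup>2) \<le> 1 + (\<Sum>k\<in>(UNIV :: ('x \<times> 'y) set). (C (snd k) (snd i))\<^sup>2)" by simp
    qed
    finally show ?thesis .
  qed
  thus ?thesis by (rule bdd_aboveI)
qed

lemma dset_le: "linear_qmap N \<Longrightarrow> x \<in> dset N \<Longrightarrow> x \<le> diamond_norm N"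
  unfolding diamond_dset by (rule cSup_upper) (auto intro: dset_bdd)

lemma pure_bound:
  fixes N :: "('ai::finite \<times> 'bi::finite) qop \<Rightarrow> ('ao::finite \<times> 'bo::finite) qop"
    and c :: "'r::finite \<times> (('ai \<times> 'am::finite) \<times> ('bi \<times> 'bm::finite)) \<Rightarrow> complex"
  assumes L: "linear_qmap N" and hp: "hp_map N" and u: "(\<Sum>k\<in>UNIV. (cmod (c k))\<^sup>2) = 1"
  shows "trace_norm (id_tensor (ext_mem N) (pure c)) \<le> diamond_norm N"
proof -
  define y' where "y' = (\<lambda>k. c (fst (fst k), ((fst (snd k), fst (snd (fst k))), (snd (snd k), snd (snd (fst k))))))"
  define K where "K = id_tensor N (pure y')"
  have hK: "herm K" unfolding K_def by (rule herm_hp[OF hp_id_tensor[OF hp] psd_herm[OF psd_pure]])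
  have "trace_norm (id_tensor (ext_mem N) (pure c)) \<le> trace_norm K"
    unfolding ext_reindex y'_def[symmetric] K_def[symmetric] by (rule tn_reindex_le[OF bij_pi5 hK])
  moreover have u': "(\<Sum>k\<in>UNIV. (cmod (y' k))\<^sup>2) = 1" unfolding y'_def norm_reindex by (rule u)
  obtain \<phi> :: "('ai \<times> 'bi) \<times> ('ai \<times> 'bi) \<Rightarrow> complex" where u\<phi>: "(\<Sum>k\<in>UNIV. (cmod (\<phi> k))\<^sup>2) = 1"
    and le: "trace_norm K \<le> trace_norm (id_tensor N (pure \<phi>))"
    using ref_reduce[OF L hp u'] unfolding K_def by blast
  have "trace_norm (id_tensor N (pure \<phi>)) \<le> diamond_norm N"
    by (rule dset_le[OF L]) (use u\<phi> in \<open>auto simp: dset_def\<close>)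
  ultimately show ?thesis using le by linarith
qed

lemma mixed_bound:
  fixes N :: "('ai::finite \<times> 'bi::finite) qop \<Rightarrow> ('ao::finite \<times> 'bo::finite) qop"
    and Y :: "('r::finite \<times> (('ai \<times> 'am::finite) \<times> ('bi \<times> 'bm::finite))) qop"
  assumes L: "linear_qmap N" and hp: "hp_map N" and pY: "psd Y" and tY: "Re (qtrace Y) = 1"
  shows "trace_norm (id_tensor (ext_mem N) Y) \<le> diamond_norm N"
proof -
  obtain U d where U: "unitary U" and Yd: "Y = udiag U d" using spectral[OF psd_herm[OF pY]] by blast
  have d0: "0 \<le> d k" for k using psd_udiag_nonneg[OF U] pY Yd by simp
  have sd: "(\<Sum>k\<in>UNIV. d k) = 1" using tY unfolding Yd qtrace_udiag[OF U] by (simp add: Re_sum)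
  have LB: "linear_qmap (id_tensor (ext_mem N))" by (rule lin_id_tensor[OF lin_ext[OF L]])
  have hpB: "hp_map (id_tensor (ext_mem N))" by (rule hp_id_tensor[OF hp_ext[OF hp]])
  have eq: "id_tensor (ext_mem N) Y = (\<lambda>i j. \<Sum>k\<in>UNIV. complex_of_real (d k) * id_tensor (ext_mem N) (pure (col U k)) i j)"
    unfolding Yd udiag_pure by (rule lin_comb[OF LB finite])
  have hs: "herm (id_tensor (ext_mem N) Y)" by (rule herm_hp[OF hpB psd_herm[OF pY]])
  have hk: "herm (id_tensor (ext_mem N) (pure (col U k)))" for k by (rule herm_hp[OF hpB psd_herm[OF psd_pure]])
  have bk: "trace_norm (id_tensor (ext_mem N) (pure (col U k))) \<le> diamond_norm N" for k
  proof (rule pure_bound[OF L hp])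
    show "(\<Sum>x\<in>UNIV. (cmod (col U k x))\<^sup>2) = 1"
      using cinner_self_Re[of "col U k"] col_norm[OF U, of k] by simp
  qed
  have "trace_norm (id_tensor (ext_mem N) Y) \<le> (\<Sum>k\<in>UNIV. \<bar>d k\<bar> * trace_norm (id_tensor (ext_mem N) (pure (col U k))))"
    unfolding eq by (rule tn_comb) (use hs eq hk in auto)
  also have "\<dots> \<le> (\<Sum>k\<in>UNIV. d k * diamond_norm N)"
    by (rule sum_mono) (simp add: d0 bk mult_left_mono)
  also have "\<dots> = diamond_norm N" by (simp add: sum_distrib_right[symmetric] sd)
  finally show ?thesis .
qed

theorem mainTheorem4:
  fixes M :: "(('ahi::finite) \<times> ('bhi::finite)) qop \<Rightarrow> (('aho::finite) \<times> ('bho::finite)) qop"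
    and Ppre :: "(('a1::finite) \<times> ('b1::finite)) qop \<Rightarrow> (('ahi \<times> ('am::finite)) \<times> ('bhi \<times> ('bm::finite))) qop"
    and Ppost :: "(('aho \<times> 'am) \<times> ('bho \<times> 'bm)) qop \<Rightarrow> (('a2::finite) \<times> ('b2::finite)) qop"
  assumes "quantum_channel M"
    and "cppt_channel Ppre"
    and "cppt_channel Ppost"
  shows "log_neg M \<ge> log_neg (superchannel_apply Ppost Ppre M)"
proof -
  have LM: "linear_qmap M" and cpM: "cp_map M" and tpM: "tp_map M"
    using assms(1) by (auto simp: quantum_channel_def)
  have LPre: "linear_qmap Ppre" and tpPre: "tp_map Ppre" and cpC: "cp_map (pt_conj Ppre)"
    using assms(2) by (auto simp: cppt_channel_def quantum_channel_def)
  have LPost: "linear_qmap Ppost" and tpPost: "tp_map Ppost" and cpA: "cp_map (pt_conj Ppost)"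
    using assms(3) by (auto simp: cppt_channel_def quantum_channel_def)
  define Nm where "Nm = pt_conj M"
  define A where "A = pt_conj Ppost"
  define C where "C = pt_conj Ppre"
  have LN: "linear_qmap Nm" unfolding Nm_def by (rule lin_ptrans_conj[OF LM])
  have hpN: "hp_map Nm" unfolding Nm_def by (rule hp_pt_conj[OF hp_of_pos[OF LM positive_of_cp[OF cpM]]])
  have tpN: "tp_map Nm" unfolding Nm_def by (rule tp_pt_conj[OF tpM])
  have LA: "linear_qmap A" unfolding A_def by (rule lin_ptrans_conj[OF LPost])
  have tpA: "tp_map A" unfolding A_def by (rule tp_pt_conj[OF tpPost])
  have cpA': "cp_map A" unfolding A_def by (rule cpA)
  have hpA: "hp_map A" by (rule hp_of_pos[OF LA positive_of_cp[OF cpA']])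
  have LC: "linear_qmap C" unfolding C_def by (rule lin_ptrans_conj[OF LPre])
  have tpC: "tp_map C" unfolding C_def by (rule tp_pt_conj[OF tpPre])
  have cpC': "cp_map C" unfolding C_def by (rule cpC)
  have eqP: "pt_conj (superchannel_apply Ppost Ppre M) = (\<lambda>X. A (ext_mem Nm (C X)))"
  proof -
    have "superchannel_apply Ppost Ppre M = (\<lambda>X. Ppost (ext_mem M (Ppre X)))"
      by (simp add: superchannel_apply_def comp_def)
    thus ?thesis unfolding A_def C_def Nm_def
      using pt_conj_comp[of Ppost "\<lambda>X. ext_mem M (Ppre X)"] pt_conj_comp[of "ext_mem M" Ppre]
      by (simp add: pt_conj_ext)
  qed
  define D where "D = diamond_norm Nm"
  have elem: "trace_norm (id_tensor (\<lambda>X. A (ext_mem Nm (C X))) (pure \<psi>)) \<le> D \<and>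
              1 \<le> trace_norm (id_tensor (\<lambda>X. A (ext_mem Nm (C X))) (pure \<psi>))"
    if u: "(\<Sum>k\<in>UNIV. (cmod (\<psi> k))\<^sup>2) = 1" for \<psi> :: "('a1 \<times> 'b1) \<times> ('a1 \<times> 'b1) \<Rightarrow> complex"
  proof -
    define Y where "Y = id_tensor C (pure \<psi>)"
    define Z where "Z = id_tensor (ext_mem Nm) Y"
    have comp: "id_tensor (\<lambda>X. A (ext_mem Nm (C X))) (pure \<psi>) = id_tensor A Z"
      unfolding Z_def Y_def id_tensor_comp[of A "\<lambda>X. ext_mem Nm (C X)"] id_tensor_comp[of "ext_mem Nm" C] ..
    have pY: "psd Y" unfolding Y_def by (rule cp_psd[OF cpC' psd_pure])
    have trY: "qtrace Y = cinner \<psi> \<psi>" unfolding Y_def tp_id_tensor[OF tpC] qtrace_pure ..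
    have tY: "Re (qtrace Y) = 1" unfolding trY cinner_self_Re using u .
    have hZ: "herm Z" unfolding Z_def
      by (rule herm_hp[OF hp_id_tensor[OF hp_ext[OF hpN]] psd_herm[OF pY]])
    have trZ: "qtrace Z = qtrace Y" unfolding Z_def by (rule tp_id_tensor[OF tp_ext[OF tpN]])
    have hO: "herm (id_tensor A Z)" by (rule herm_hp[OF hp_id_tensor[OF hpA] hZ])
    have trO: "qtrace (id_tensor A Z) = qtrace Z" by (rule tp_id_tensor[OF tpA])
    have "trace_norm (id_tensor A Z) \<le> trace_norm Z" by (rule tn_contract[OF LA cpA' tpA hZ])
    also have "trace_norm Z \<le> D" unfolding Z_def D_def by (rule mixed_bound[OF LN hpN pY tY])
    finally have up: "trace_norm (id_tensor A Z) \<le> D" .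
    have "Re (qtrace (id_tensor A Z)) \<le> trace_norm (id_tensor A Z)" by (rule tn_herm_ge_trace[OF hO])
    hence lo: "1 \<le> trace_norm (id_tensor A Z)" unfolding trO trZ tY .
    show ?thesis unfolding comp using up lo by simp
  qed
  define S2 where "S2 = dset (\<lambda>X. A (ext_mem Nm (C X)))"
  define \<psi>0 :: "('a1 \<times> 'b1) \<times> ('a1 \<times> 'b1) \<Rightarrow> complex" where "\<psi>0 = (\<lambda>k. if k = undefined then 1 else 0)"
  have u0: "(\<Sum>k\<in>UNIV. (cmod (\<psi>0 k))\<^sup>2) = 1"
  proof -
    have e: "(cmod (\<psi>0 k))\<^sup>2 = (if k = undefined then 1 else (0::real))" for k by (simp add: \<psi>0_def)
    show ?thesis unfolding e by simp
  qed
  have mem0: "trace_norm (id_tensor (\<lambda>X. A (ext_mem Nm (C X))) (pure \<psi>0)) \<in> S2"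
    unfolding S2_def dset_def using u0 by blast
  have ub: "x \<le> D" if "x \<in> S2" for x using that elem unfolding S2_def dset_def by blast
  have ne: "S2 \<noteq> {}" using mem0 by blast
  have bdd: "bdd_above S2" using ub by (rule bdd_aboveI)
  have sup_le: "Sup S2 \<le> D" by (rule cSup_least[OF ne ub])
  have "1 \<le> trace_norm (id_tensor (\<lambda>X. A (ext_mem Nm (C X))) (pure \<psi>0))" using elem[OF u0] by simp
  also have "\<dots> \<le> Sup S2" by (rule cSup_upper[OF mem0 bdd])
  finally have sup_ge: "1 \<le> Sup S2" .
  have "log_neg (superchannel_apply Ppost Ppre M) = log 2 (Sup S2)"
    unfolding log_neg_def eqP S2_def diamond_dset ..
  also have "\<dots> \<le> log 2 D" using sup_ge sup_le by (subst log_le_cancel_iff) auto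
  also have "log 2 D = log_neg M" unfolding D_def Nm_def log_neg_def ..
  finally show ?thesis .
qed

end
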